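(* For $n\ge1$, $$\sum_{\pi\in\mathfrak{S}_n(213)}t^{\mathsf{des}\,\pi}q^{\mathsf{adi}\,\pi}=\sum_{\pi\in\mathfrak{S}_n(132)}t^{\mathsf{des}\,\pi}q^{\mathsf{adi}^*\,\pi}=\sum_{k=0}^{\lfloor (n-1)/2\rfloor}\Big(\sum_{\pi\in\widetilde{\mathfrak{S}}_{n,k}(213)}q^{\mathsf{adi}\,\pi}\Big)t^k(1+t)^{n-1-2k}=\sum_{k=0}^{\lfloor (n-1)/2\rfloor}\Big(\sum_{\pi\in\widetilde{\mathfrak{S}}_{n,k}(132)}q^{\mathsf{adi}^*\,\pi}\Big)t^k(1+t)^{n-1-2k}.$$
   Context: $\mathfrak{S}_n(\tau)$: permutations of $[n]$ avoiding the classical pattern $\tau$. $\mathsf{des}\,\pi=\#\{i\in[n-1]:\pi(i)>\pi(i+1)\}$. Admissible inversions: set $\pi(n+1)=0$; an inversion pair $(\pi(i),\pi(j))$ ($1\le i<j\le n$, $\pi(i)>\pi(j)$) is admissible if $\pi(j)<\pi(j+1)$ or there is $l$ with $i<l<j$ and $\pi(l)<\pi(j)$; $\mathsf{adi}\,\pi$ counts them. Star admissible: set $\pi(0)=n+1$; an inversion pair $(\pi(i),\pi(j))$ with $i<j$ is star admissible if $\pi(i-1)<\pi(i)$ or there is $l$ with $i<l<j$ and $\pi(l)>\pi(i)$; $\mathsf{adi}^*\,\pi$ counts them. $\mathsf{dd}\,\pi$ is the number of $i\in[n]$ with $\pi(i-1)>\pi(i)>\pi(i+1)$ under $\pi(0)=\pi(n+1)=0$;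 $\mathsf{dd}^*\,\pi$ is the same with $\pi(0)=\pi(n+1)=n+1$. $\widetilde{\mathfrak{S}}_{n,k}(213)=\{\pi\in\mathfrak{S}_n(213):\mathsf{dd}\,\pi=0,\mathsf{des}\,\pi=k\}$, $\widetilde{\mathfrak{S}}_{n,k}(132)=\{\pi\in\mathfrak{S}_n(132):\mathsf{dd}^*\,\pi=0,\mathsf{des}\,\pi=k\}$. *)

theory Defs
  imports "HOL-Combinatorics.Permutations"
begin

text \<open>Permutations of [n] are functions p with p permutes {1..n}; p i is the value at position i.\<close>

definition contains_pattern :: "nat list \<Rightarrow> nat \<Rightarrow> (nat \<Rightarrow> nat) \<Rightarrow> bool" where
  "contains_pattern pat n p \<longleftrightarrow>
     (\<exists>idx :: nat \<Rightarrow> nat. strict_mono_on {0..<length pat} idx \<and>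
        (\<forall>k<length pat. idx k \<in> {1..n}) \<and>
        (\<forall>a<length pat. \<forall>b<length pat. (pat ! a < pat ! b \<longleftrightarrow> p (idx a) < p (idx b))))"

definition avoiders :: "nat \<Rightarrow> nat list \<Rightarrow> (nat \<Rightarrow> nat) set" where
  "avoiders n pat = {p. p permutes {1..n} \<and> \<not> contains_pattern pat n p}"

definition des :: "nat \<Rightarrow> (nat \<Rightarrow> nat) \<Rightarrow> nat" where
  "des n p = card {i \<in> {1..<n}. p i > p (i+1)}"

definition ext :: "nat \<Rightarrow> nat \<Rightarrow> nat \<Rightarrow> (nat \<Rightarrow> nat) \<Rightarrow> nat \<Rightarrow> nat" where
  "ext a b n p j = (if j = 0 then a else if j = n + 1 then b else p j)"

definition adi :: "nat \<Rightarrow> (nat \<Rightarrow> nat) \<Rightarrow> nat" where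
  "adi n p = card {(i, j). 1 \<le> i \<and> i < j \<and> j \<le> n \<and> p i > p j \<and>
      (ext 0 0 n p j < ext 0 0 n p (j+1) \<or> (\<exists>l. i < l \<and> l < j \<and> p l < p j))}"

definition adi_star :: "nat \<Rightarrow> (nat \<Rightarrow> nat) \<Rightarrow> nat" where
  "adi_star n p = card {(i, j). 1 \<le> i \<and> i < j \<and> j \<le> n \<and> p i > p j \<and>
      (ext (n+1) (n+1) n p (i-1) < ext (n+1) (n+1) n p i \<or> (\<exists>l. i < l \<and> l < j \<and> p l > p i))}"

definition dd :: "nat \<Rightarrow> (nat \<Rightarrow> nat) \<Rightarrow> nat" where
  "dd n p = card {i \<in> {1..n}. ext 0 0 n p (i-1) > ext 0 0 n p i \<and> ext 0 0 n p i > ext 0 0 n p (i+1)}"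

definition dd_star :: "nat \<Rightarrow> (nat \<Rightarrow> nat) \<Rightarrow> nat" where
  "dd_star n p = card {i \<in> {1..n}. ext (n+1) (n+1) n p (i-1) > ext (n+1) (n+1) n p i \<and>
      ext (n+1) (n+1) n p i > ext (n+1) (n+1) n p (i+1)}"

definition tilde213 :: "nat \<Rightarrow> nat \<Rightarrow> (nat \<Rightarrow> nat) set" where
  "tilde213 n k = {p \<in> avoiders n [2,1,3]. dd n p = 0 \<and> des n p = k}"

definition tilde132 :: "nat \<Rightarrow> nat \<Rightarrow> (nat \<Rightarrow> nat) set" where
  "tilde132 n k = {p \<in> avoiders n [1,3,2]. dd_star n p = 0 \<and> des n p = k}"

end

theory Submission
  imports Defs
begin

lemma contains_213:
  "contains_pattern [2,1,3] n p \<longleftrightarrow> (\<exists>i j k. 1\<le>i \<and> i<j \<and> j<k \<and> k\<le>n \<and> p j < p i \<and> p i < p k)"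
proof
  assume a: "contains_pattern [2,1,3] n p"
  obtain idx where m: "strict_mono_on {0..<3} idx" and r: "\<forall>k<3. idx k \<in> {1..n}"
    and c: "\<forall>a<3. \<forall>b<3. ([2,1,3::nat] ! a < [2,1,3] ! b \<longleftrightarrow> p (idx a) < p (idx b))"
    using a unfolding contains_pattern_def length_Cons list.size by (metis numeral_3_eq_3 Suc_1 add_0 One_nat_def)
  have "idx 0 < idx 1" "idx 1 < idx 2" using m by (simp_all add: strict_mono_on_def)
  moreover have "p (idx 1) < p (idx 0)" "p (idx 0) < p (idx 2)"
    using c[rule_format, of 1 0] c[rule_format, of 0 2] by simp_all
  moreover have "idx 0 \<ge> 1" "idx 2 \<le> n" using r by simp_all
  ultimately show "\<exists>i j k. 1\<le>i \<and> i<j \<and> j<k \<and> k\<le>n \<and> p j < p i \<and> p i < p k" by blast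
next
  assume "\<exists>i j k. 1\<le>i \<and> i<j \<and> j<k \<and> k\<le>n \<and> p j < p i \<and> p i < p k"
  then obtain i j k where h: "1\<le>i" "i<j" "j<k" "k\<le>n" "p j < p i" "p i < p k" by blast
  define idx where "idx = (\<lambda>m::nat. if m = 0 then i else if m = 1 then j else k)"
  have "strict_mono_on {0..<3} idx"
    unfolding strict_mono_on_def idx_def using h by (auto simp: numeral_3_eq_3 less_Suc_eq)
  moreover have "\<forall>m<3. idx m \<in> {1..n}" unfolding idx_def using h by (simp add: numeral_3_eq_3 less_Suc_eq)
  moreover have "\<forall>a<3. \<forall>b<3. ([2,1,3::nat] ! a < [2,1,3] ! b \<longleftrightarrow> p (idx a) < p (idx b))"
    unfolding idx_def using h by (simp add: numeral_3_eq_3 less_Suc_eq all_conj_distrib)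
  ultimately show "contains_pattern [2,1,3] n p" unfolding contains_pattern_def
    by (intro exI[of _ idx]) (simp add: numeral_3_eq_3)
qed
lemma contains_132:
  "contains_pattern [1,3,2] n p \<longleftrightarrow> (\<exists>i j k. 1\<le>i \<and> i<j \<and> j<k \<and> k\<le>n \<and> p i < p k \<and> p k < p j)"
proof
  assume a: "contains_pattern [1,3,2] n p"
  obtain idx where m: "strict_mono_on {0..<3} idx" and r: "\<forall>k<3. idx k \<in> {1..n}"
    and c: "\<forall>a<3. \<forall>b<3. ([1,3,2::nat] ! a < [1,3,2] ! b \<longleftrightarrow> p (idx a) < p (idx b))"
    using a unfolding contains_pattern_def length_Cons list.size by (metis numeral_3_eq_3 Suc_1 add_0 One_nat_def)
  have "idx 0 < idx 1" "idx 1 < idx 2" using m by (simp_all add: strict_mono_on_def)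
  moreover have "p (idx 0) < p (idx 2)" "p (idx 2) < p (idx 1)"
    using c[rule_format, of 0 2] c[rule_format, of 2 1] by simp_all
  moreover have "idx 0 \<ge> 1" "idx 2 \<le> n" using r by simp_all
  ultimately show "\<exists>i j k. 1\<le>i \<and> i<j \<and> j<k \<and> k\<le>n \<and> p i < p k \<and> p k < p j" by blast
next
  assume "\<exists>i j k. 1\<le>i \<and> i<j \<and> j<k \<and> k\<le>n \<and> p i < p k \<and> p k < p j"
  then obtain i j k where h: "1\<le>i" "i<j" "j<k" "k\<le>n" "p i < p k" "p k < p j" by blast
  define idx where "idx = (\<lambda>m::nat. if m = 0 then i else if m = 1 then j else k)"
  have "strict_mono_on {0..<3} idx"
    unfolding strict_mono_on_def idx_def using h by (auto simp: numeral_3_eq_3 less_Suc_eq)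
  moreover have "\<forall>m<3. idx m \<in> {1..n}" unfolding idx_def using h by (simp add: numeral_3_eq_3 less_Suc_eq)
  moreover have "\<forall>a<3. \<forall>b<3. ([1,3,2::nat] ! a < [1,3,2] ! b \<longleftrightarrow> p (idx a) < p (idx b))"
    unfolding idx_def using h by (simp add: numeral_3_eq_3 less_Suc_eq all_conj_distrib)
  ultimately show "contains_pattern [1,3,2] n p" unfolding contains_pattern_def
    by (intro exI[of _ idx]) (simp add: numeral_3_eq_3)
qed

definition rv :: "nat \<Rightarrow> nat \<Rightarrow> nat" where "rv n i = (if i \<in> {1..n} then Suc n - i else i)"
definition rc :: "nat \<Rightarrow> (nat \<Rightarrow> nat) \<Rightarrow> nat \<Rightarrow> nat" where "rc n p = rv n \<circ> p \<circ> rv n"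

lemma rv_rv[simp]: "rv n (rv n i) = i" by (auto simp: rv_def)

lemma rv_permutes: "rv n permutes {1..n}"
proof (rule bij_imp_permutes)
  show "bij_betw (rv n) {1..n} {1..n}"
    by (rule bij_betw_byWitness[of _ "rv n"]) (auto simp: rv_def)
qed (auto simp: rv_def)

lemma rc_permutes: "p permutes {1..n} \<Longrightarrow> rc n p permutes {1..n}"
  unfolding rc_def by (intro permutes_compose rv_permutes) 

lemma rc_rc: "rc n (rc n p) = p" by (auto simp: rc_def fun_eq_iff)

lemma perm_range: "p permutes {1..n} \<Longrightarrow> i \<in> {1..n} \<Longrightarrow> 1 \<le> p i \<and> p i \<le> n"
  using permutes_in_image[of p "{1..n}" i] by auto

lemma rc_val: "p permutes {1..n} \<Longrightarrow> 1 \<le> i \<Longrightarrow> i \<le> n \<Longrightarrow> rc n p i = Suc n - p (Suc n - i)"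
proof -
  assume p: "p permutes {1..n}" and i: "1 \<le> i" "i \<le> n"
  have "rv n i = Suc n - i" using i by (simp add: rv_def)
  moreover have "p (Suc n - i) \<in> {1..n}" using permutes_in_image[OF p, of "Suc n - i"] i by auto
  ultimately show ?thesis by (simp add: rc_def rv_def)
qed

lemma card_invol:
  assumes "\<And>x. x\<in>A \<Longrightarrow> f x \<in> B" "\<And>y. y\<in>B \<Longrightarrow> f y \<in> A"
    "\<And>x. x\<in>A \<Longrightarrow> f (f x) = x" "\<And>y. y\<in>B \<Longrightarrow> f (f y) = y"
  shows "card A = card B"
proof -
  have "bij_betw f A B" by (rule bij_betw_byWitness[of _ f]) (use assms in auto)
  then show ?thesis by (rule bij_betw_same_card)
qed

lemma rc_213_132:
  assumes p: "p permutes {1..n}" and c: "contains_pattern [2,1,3] n p"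
  shows "contains_pattern [1,3,2] n (rc n p)"
proof -
  obtain i j k where h: "1\<le>i" "i<j" "j<k" "k\<le>n" "p j < p i" "p i < p k"
    using c unfolding contains_213 by blast
  have r: "p i \<le> n" "p j \<le> n" "p k \<le> n" using perm_range[OF p] h by auto
  have "rc n p (Suc n - k) = Suc n - p k" "rc n p (Suc n - j) = Suc n - p j" "rc n p (Suc n - i) = Suc n - p i"
    using rc_val[OF p] h by (auto simp: Suc_diff_le)
  then show ?thesis unfolding contains_132 using h r
    by (intro exI[of _ "Suc n - k"] exI[of _ "Suc n - j"] exI[of _ "Suc n - i"]) auto
qed

lemma rc_132_213:
  assumes p: "p permutes {1..n}" and c: "contains_pattern [1,3,2] n p"
  shows "contains_pattern [2,1,3] n (rc n p)"
proof -
  obtain i j k where h: "1\<le>i" "i<j" "j<k" "k\<le>n" "p i < p k" "p k < p j"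
    using c unfolding contains_132 by blast
  have r: "p i \<le> n" "p j \<le> n" "p k \<le> n" using perm_range[OF p] h by auto
  have "rc n p (Suc n - k) = Suc n - p k" "rc n p (Suc n - j) = Suc n - p j" "rc n p (Suc n - i) = Suc n - p i"
    using rc_val[OF p] h by (auto simp: Suc_diff_le)
  then show ?thesis unfolding contains_213 using h r
    by (intro exI[of _ "Suc n - k"] exI[of _ "Suc n - j"] exI[of _ "Suc n - i"]) auto
qed

lemma des_rc: assumes p: "p permutes {1..n}" shows "des n (rc n p) = des n p"
  unfolding des_def
proof (rule card_invol[where f = "\<lambda>i. n - i"])
  fix x assume "x \<in> {i \<in> {1..<n}. rc n p (i + 1) < rc n p i}"
  then have x: "1 \<le> x" "x < n" "rc n p (x + 1) < rc n p x" by auto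
  have e: "rc n p (x+1) = Suc n - p (n - x)" "rc n p x = Suc n - p (Suc n - x)"
    using rc_val[OF p, of "x+1"] rc_val[OF p, of x] x by (auto simp: Suc_diff_Suc)
  have b: "p (n-x) \<le> n" "p (Suc n - x) \<le> n" using perm_range[OF p, of "n-x"] perm_range[OF p, of "Suc n - x"] x
    by (simp_all add: le_diff_conv2 Suc_diff_le)
  have "Suc n - p (n - x) < Suc n - p (Suc n - x)" using x(3) unfolding e .
  then have "p (Suc n - x) < p (n - x)" using b by linarith
  then have "p (Suc (n-x)) < p (n - x)" using x by (simp add: Suc_diff_le)
  then show "n - x \<in> {i \<in> {1..<n}. p (i + 1) < p i}" using x by auto
next
  fix x assume "x \<in> {i \<in> {1..<n}. p (i + 1) < p i}"
  then have x: "1 \<le> x" "x < n" "p (x + 1) < p x" by auto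
  have "rc n p (n - x + 1) = Suc n - p x" "rc n p (n - x) = Suc n - p (Suc x)"
    using rc_val[OF p, of "n-x+1"] rc_val[OF p, of "n-x"] x by (simp_all add: Suc_diff_le)
  moreover have "p x \<le> n" "p (Suc x) \<le> n" using perm_range[OF p, of x] perm_range[OF p, of "Suc x"] x by auto
  ultimately have "rc n p (n - x + 1) < rc n p (n - x)" using x by simp
  then show "n - x \<in> {i \<in> {1..<n}. rc n p (i + 1) < rc n p i}" using x by simp
qed simp_all

lemma adi_rc: assumes p: "p permutes {1..n}" shows "adi_star n (rc n p) = adi n p"
proof -
  define q where "q = rc n p"
  have qv: "\<And>i. 1\<le>i \<Longrightarrow> i\<le>n \<Longrightarrow> q i = Suc n - p (Suc n - i)" using rc_val[OF p] q_def by blast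
  have pr: "\<And>i. 1\<le>i \<Longrightarrow> i\<le>n \<Longrightarrow> 1 \<le> p i \<and> p i \<le> n" using perm_range[OF p] by auto
  let ?S = "{(i, j). 1 \<le> i \<and> i < j \<and> j \<le> n \<and> p i > p j \<and>
      (ext 0 0 n p j < ext 0 0 n p (j+1) \<or> (\<exists>l. i < l \<and> l < j \<and> p l < p j))}"
  let ?T = "{(i, j). 1 \<le> i \<and> i < j \<and> j \<le> n \<and> q i > q j \<and>
      (ext (n+1) (n+1) n q (i-1) < ext (n+1) (n+1) n q i \<or> (\<exists>l. i < l \<and> l < j \<and> q l > q i))}"
  define f where "f = (\<lambda>(i::nat,j::nat). (Suc n - j, Suc n - i))"
  have "card ?T = card ?S"
  proof (rule card_invol[where f = f])
    fix x assume "x \<in> ?T"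
    then obtain i j where x: "x = (i,j)" and h: "1 \<le> i" "i < j" "j \<le> n" "q i > q j"
      and c: "ext (n+1) (n+1) n q (i-1) < ext (n+1) (n+1) n q i \<or> (\<exists>l. i < l \<and> l < j \<and> q l > q i)" by blast
    define i' where "i' = Suc n - j"
    define j' where "j' = Suc n - i"
    have fx: "f x = (i', j')" unfolding x f_def i'_def j'_def by simp
    have ij: "1 \<le> i'" "i' < j'" "j' \<le> n" "i = Suc n - j'" "j = Suc n - i'" using h unfolding i'_def j'_def by auto
    have qi: "q i = Suc n - p j'" "q j = Suc n - p i'" using qv h ij by auto
    have pb: "1 \<le> p i'" "p i' \<le> n" "1 \<le> p j'" "p j' \<le> n" using pr ij by auto
    have o: "p i' > p j'" using h(4) unfolding qi using pb by linarith
    have "ext 0 0 n p j' < ext 0 0 n p (j'+1) \<or> (\<exists>l. i' < l \<and> l < j' \<and> p l < p j')"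
      using c
    proof
      assume c1: "ext (n+1) (n+1) n q (i-1) < ext (n+1) (n+1) n q i"
      have "i \<noteq> 1"
      proof
        assume "i = 1" then have "ext (n+1) (n+1) n q (i-1) = n+1" by (simp add: ext_def)
        moreover have "ext (n+1) (n+1) n q i = q i" using h by (simp add: ext_def)
        ultimately show False using c1 qi by simp
      qed
      then have i2: "2 \<le> i" using h by simp
      have j'n: "j' < n" using i2 ij by simp
      have im: "i - 1 = n - j'" using j'n ij by auto
      have im2: "Suc n - (n - j') = Suc j'" using j'n by auto
      have "q (n - j') = Suc n - p (Suc n - (n - j'))" using qv[of "n - j'"] j'n by simp
      then have "q (n - j') = Suc n - p (Suc j')" by (simp only: im2)
      moreover have "ext (n+1) (n+1) n q (i-1) = ext (n+1) (n+1) n q (n-j')" by (simp only: im)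
      moreover have "n - j' \<noteq> 0" "n - j' \<noteq> n+1" using j'n by auto
      then have "ext (n+1) (n+1) n q (n-j') = q (n-j')" unfolding ext_def by metis
      ultimately have e1: "ext (n+1) (n+1) n q (i-1) = Suc n - p (Suc j')" by simp
      have e2: "ext (n+1) (n+1) n q i = Suc n - p j'" using h qi by (simp add: ext_def)
      have "1 \<le> p (Suc j')" "p (Suc j') \<le> n" using pr[of "Suc j'"] j'n by auto
      then have "p j' < p (Suc j')" using c1 pb unfolding e1 e2 by linarith
      then show ?thesis using j'n ij by (simp add: ext_def)
    next
      assume "\<exists>l. i < l \<and> l < j \<and> q l > q i"
      then obtain l where l: "i < l" "l < j" "q l > q i" by blast
      have "q l = Suc n - p (Suc n - l)" using qv l h by simp
      moreover have "1 \<le> p (Suc n - l)" "p (Suc n - l) \<le> n" using pr[of "Suc n - l"] l h by auto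
      ultimately have "p (Suc n - l) < p j'" using l(3) qi pb by linarith
      moreover have "i' < Suc n - l" "Suc n - l < j'" using l h ij unfolding i'_def j'_def by auto
      ultimately show ?thesis by blast
    qed
    then show "f x \<in> ?S" unfolding fx using ij o by blast
  next
    fix x assume "x \<in> ?S"
    then obtain i j where x: "x = (i,j)" and h: "1 \<le> i" "i < j" "j \<le> n" "p i > p j"
      and c: "ext 0 0 n p j < ext 0 0 n p (j+1) \<or> (\<exists>l. i < l \<and> l < j \<and> p l < p j)" by blast
    define i' where "i' = Suc n - j"
    define j' where "j' = Suc n - i"
    have fx: "f x = (i', j')" unfolding x f_def i'_def j'_def by simp
    have ij: "1 \<le> i'" "i' < j'" "j' \<le> n" "i = Suc n - j'" "j = Suc n - i'" using h unfolding i'_def j'_def by auto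
    have qi: "q i' = Suc n - p j" "q j' = Suc n - p i" using qv h ij by auto
    have pb: "1 \<le> p i" "p i \<le> n" "1 \<le> p j" "p j \<le> n" using pr h by auto
    have o: "q i' > q j'" unfolding qi using pb h(4) by linarith
    have "ext (n+1) (n+1) n q (i'-1) < ext (n+1) (n+1) n q i' \<or> (\<exists>l. i' < l \<and> l < j' \<and> q l > q i')"
      using c
    proof
      assume c1: "ext 0 0 n p j < ext 0 0 n p (j+1)"
      have "j \<noteq> n"
      proof
        assume "j = n" then have "ext 0 0 n p (j+1) = 0" by (simp add: ext_def)
        then show False using c1 by simp
      qed
      then have jn: "j < n" using h by simp
      have e1: "ext 0 0 n p (j+1) = p (Suc j)" using jn by (simp add: ext_def)
      have e2: "ext 0 0 n p j = p j" using h by (simp add: ext_def)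
      have i2: "2 \<le> i'" using jn unfolding i'_def by simp
      have im: "i' - 1 = n - j" using jn unfolding i'_def by auto
      have im2: "Suc n - (n - j) = Suc j" using jn by auto
      have "q (n - j) = Suc n - p (Suc n - (n - j))" using qv[of "n - j"] jn by simp
      then have "q (n - j) = Suc n - p (Suc j)" by (simp only: im2)
      moreover have "ext (n+1) (n+1) n q (i'-1) = ext (n+1) (n+1) n q (n-j)" by (simp only: im)
      moreover have "n - j \<noteq> 0" "n - j \<noteq> n+1" using jn by auto
      then have "ext (n+1) (n+1) n q (n-j) = q (n-j)" unfolding ext_def by metis
      ultimately have e3: "ext (n+1) (n+1) n q (i'-1) = Suc n - p (Suc j)" by simp
      have e4: "ext (n+1) (n+1) n q i' = Suc n - p j" using ij qi by (simp add: ext_def)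
      have "1 \<le> p (Suc j)" "p (Suc j) \<le> n" using pr[of "Suc j"] jn by auto
      then have "Suc n - p (Suc j) < Suc n - p j" using c1 pb unfolding e1 e2 by linarith
      then show ?thesis unfolding e3 e4 by blast
    next
      assume "\<exists>l. i < l \<and> l < j \<and> p l < p j"
      then obtain l where l: "i < l" "l < j" "p l < p j" by blast
      have "q (Suc n - l) = Suc n - p l" using qv[of "Suc n - l"] l h by simp
      moreover have "1 \<le> p l" "p l \<le> n" using pr[of l] l h by auto
      ultimately have "q (Suc n - l) > q i'" using l(3) qi pb by linarith
      moreover have "i' < Suc n - l" "Suc n - l < j'" using l h ij unfolding i'_def j'_def by auto
      ultimately show ?thesis by blast
    qed
    then show "f x \<in> ?T" unfolding fx using ij o by blast
  next
    fix x assume "x \<in> ?T" then show "f (f x) = x" unfolding f_def by auto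
  next
    fix x assume "x \<in> ?S" then show "f (f x) = x" unfolding f_def by auto
  qed
  then show ?thesis unfolding adi_def adi_star_def q_def by simp
qed

lemma ext_le: "p permutes {1..n} \<Longrightarrow> m \<le> Suc n \<Longrightarrow> ext 0 0 n p m \<le> n"
  using perm_range[of p n m] by (auto simp: ext_def)

lemma ext_rc: assumes p: "p permutes {1..n}" and m: "m \<le> Suc n"
  shows "ext (n+1) (n+1) n (rc n p) m = Suc n - ext 0 0 n p (Suc n - m)"
proof (cases "m = 0 \<or> m = Suc n")
  case True then show ?thesis by (auto simp: ext_def)
next
  case False
  then have m1: "1 \<le> m" "m \<le> n" using m by auto
  have "Suc n - m \<noteq> 0" "Suc n - m \<noteq> n + 1" using m1 by auto
  then have "ext 0 0 n p (Suc n - m) = p (Suc n - m)" unfolding ext_def by metis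
  moreover have "ext (n+1) (n+1) n (rc n p) m = rc n p m" using False by (simp add: ext_def)
  ultimately show ?thesis using rc_val[OF p m1] by simp
qed

lemma dd_rc: assumes p: "p permutes {1..n}" shows "dd_star n (rc n p) = dd n p"
proof -
  let ?E = "ext (n+1) (n+1) n (rc n p)" and ?X = "ext 0 0 n p"
  have E: "\<And>m. m \<le> Suc n \<Longrightarrow> ?E m = Suc n - ?X (Suc n - m)" using ext_rc[OF p] by blast
  have X: "\<And>m. m \<le> Suc n \<Longrightarrow> ?X m \<le> n" using ext_le[OF p] by blast
  have "card {i \<in> {1..n}. ?E (i-1) > ?E i \<and> ?E i > ?E (i+1)} =
        card {i \<in> {1..n}. ?X (i-1) > ?X i \<and> ?X i > ?X (i+1)}"
  proof (rule card_invol[where f = "\<lambda>i. Suc n - i"])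
    fix x assume "x \<in> {i \<in> {1..n}. ?E (i-1) > ?E i \<and> ?E i > ?E (i+1)}"
    then have x: "1 \<le> x" "x \<le> n" "?E (x-1) > ?E x" "?E x > ?E (x+1)" by auto
    define y where "y = Suc n - x"
    have y: "1 \<le> y" "y \<le> n" unfolding y_def using x by auto
    have a1: "Suc n - (x - 1) = y + 1" "Suc n - x = y" "Suc n - (x+1) = y - 1" unfolding y_def using x by auto
    have "?E (x-1) = Suc n - ?X (y+1)" using E[of "x-1"] x unfolding a1 by simp
    moreover have "?E x = Suc n - ?X y" using E[of x] x unfolding a1 by simp
    moreover have "?E (x+1) = Suc n - ?X (y-1)" using E[of "x+1"] x unfolding a1 by simp
    moreover have "?X (y+1) \<le> n" "?X y \<le> n" "?X (y-1) \<le> n" using X y by auto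
    ultimately have "?X (y+1) < ?X y" "?X y < ?X (y-1)" using x(3,4) by linarith+
    then show "Suc n - x \<in> {i \<in> {1..n}. ?X (i-1) > ?X i \<and> ?X i > ?X (i+1)}"
      using y unfolding y_def[symmetric] by auto
  next
    fix x assume "x \<in> {i \<in> {1..n}. ?X (i-1) > ?X i \<and> ?X i > ?X (i+1)}"
    then have x: "1 \<le> x" "x \<le> n" "?X (x-1) > ?X x" "?X x > ?X (x+1)" by auto
    define y where "y = Suc n - x"
    have y: "1 \<le> y" "y \<le> n" unfolding y_def using x by auto
    have a1: "Suc n - (y - 1) = x + 1" "Suc n - y = x" "Suc n - (y+1) = x - 1" unfolding y_def using x by auto
    have "?E (y-1) = Suc n - ?X (x+1)" using E[of "y-1"] y unfolding a1 by simp
    moreover have "?E y = Suc n - ?X x" using E[of y] y unfolding a1 by simp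
    moreover have "?E (y+1) = Suc n - ?X (x-1)" using E[of "y+1"] y unfolding a1 by simp
    moreover have "?X (x+1) \<le> n" "?X x \<le> n" "?X (x-1) \<le> n" using X x by auto
    ultimately have "?E (y-1) > ?E y" "?E y > ?E (y+1)" using x(3,4) by linarith+
    then show "Suc n - x \<in> {i \<in> {1..n}. ?E (i-1) > ?E i \<and> ?E i > ?E (i+1)}"
      using y unfolding y_def[symmetric] by auto
  qed auto
  then show ?thesis unfolding dd_def dd_star_def by simp
qed

definition build :: "nat \<Rightarrow> nat \<Rightarrow> (nat \<Rightarrow> nat) \<Rightarrow> (nat \<Rightarrow> nat) \<Rightarrow> nat \<Rightarrow> nat" where
  "build a b s t i = (if 1 \<le> i \<and> i \<le> a then s i + (b+1) else if i = a+1 then 1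
     else if a+2 \<le> i \<and> i \<le> a+b+1 then t (i - (a+1)) + 1 else i)"

context
  fixes a b :: nat and s t :: "nat \<Rightarrow> nat"
  assumes s: "s permutes {1..a}" and t: "t permutes {1..b}"
begin

lemma bS: "1 \<le> i \<Longrightarrow> i \<le> a \<Longrightarrow> build a b s t i = s i + (b+1)"
  by (simp add: build_def)
lemma b1: "build a b s t (a+1) = 1"
  by (simp add: build_def)
lemma bT: "1 \<le> i \<Longrightarrow> i \<le> b \<Longrightarrow> build a b s t (i + (a+1)) = t i + 1"
  by (simp add: build_def)
lemma bO: "i = 0 \<or> i > a+b+1 \<Longrightarrow> build a b s t i = i"
  by (auto simp add: build_def)

lemma sR: "1 \<le> i \<Longrightarrow> i \<le> a \<Longrightarrow> 1 \<le> s i \<and> s i \<le> a" using perm_range[OF s, of i] by simp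
lemma tR: "1 \<le> i \<Longrightarrow> i \<le> b \<Longrightarrow> 1 \<le> t i \<and> t i \<le> b" using perm_range[OF t, of i] by simp

lemma build_permutes: "build a b s t permutes {1..a+b+1}"
proof (rule bij_imp_permutes)
  let ?v = "build a b s t" and ?A = "{1..a+b+1}"
  have inj: "inj_on ?v ?A"
  proof (rule inj_onI)
    fix x y assume x: "x \<in> ?A" and y: "y \<in> ?A" and e: "?v x = ?v y"
    have cx: "(1 \<le> x \<and> x \<le> a) \<or> x = a+1 \<or> (\<exists>x'. 1 \<le> x' \<and> x' \<le> b \<and> x = x' + (a+1))"
      using x by (cases "x \<le> a+1") (auto intro: exI[of _ "x - (a+1)"])
    have cy: "(1 \<le> y \<and> y \<le> a) \<or> y = a+1 \<or> (\<exists>y'. 1 \<le> y' \<and> y' \<le> b \<and> y = y' + (a+1))"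
      using y by (cases "y \<le> a+1") (auto intro: exI[of _ "y - (a+1)"])
    show "x = y"
      using cx cy
    proof (elim disjE exE conjE)
      assume "1 \<le> x" "x \<le> a" "1 \<le> y" "y \<le> a"
      then show "x = y" using e bS permutes_inj[OF s] by (metis add_right_cancel injD)
    next
      fix x' y' assume h: "1 \<le> x'" "x' \<le> b" "x = x' + (a+1)" "1 \<le> y'" "y' \<le> b" "y = y' + (a+1)"
      then have "t x' = t y'" using e bT by (metis add_right_cancel)
      then show "x = y" using h permutes_inj[OF t] by (metis injD)
    qed (use e bS b1 bT sR tR in \<open>force+\<close>)
  qed
  moreover have "?v ` ?A \<subseteq> ?A"
  proof
    fix y assume "y \<in> ?v ` ?A"
    then obtain x where x: "x \<in> ?A" "y = ?v x" by blast
    have cx: "(1 \<le> x \<and> x \<le> a) \<or> x = a+1 \<or> (\<exists>x'. 1 \<le> x' \<and> x' \<le> b \<and> x = x' + (a+1))"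
      using x by (cases "x \<le> a+1") (auto intro: exI[of _ "x - (a+1)"])
    then show "y \<in> ?A" using x bS b1 bT sR tR by force
  qed
  ultimately show "bij_betw ?v ?A ?A" unfolding bij_betw_def using endo_inj_surj[of ?A ?v] by auto
qed (auto simp: build_def)

end

context
  fixes a b :: nat and s t :: "nat \<Rightarrow> nat"
  assumes s: "s permutes {1..a}" and t: "t permutes {1..b}"
begin

lemma pos_cases:
  assumes "1 \<le> x" "x \<le> a+b+1"
  obtains "1 \<le> x" "x \<le> a" | "x = a+1" | x' where "1 \<le> x'" "x' \<le> b" "x = x' + (a+1)"
proof -
  consider "x \<le> a" | "x = a+1" | "x > a+1" by linarith
  then show thesis
  proof cases
    case 1 then show ?thesis using that(1) assms by simp
  next
    case 2 then show ?thesis using that(2) by simp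
  next
    case 3 then show ?thesis using that(3)[of "x - (a+1)"] assms by simp
  qed
qed

lemma des_build: "des (a+b+1) (build a b s t) = des a s + des b t + (if a > 0 then 1 else 0)"
proof -
  let ?v = "build a b s t"
  let ?Dv = "{i \<in> {1..<a+b+1}. ?v (i+1) < ?v i}"
  let ?Ds = "{i \<in> {1..<a}. s (i+1) < s i}"
  let ?Dt = "{i \<in> {1..<b}. t (i+1) < t i}"
  let ?A0 = "(if a > 0 then {a} else {})"
  have bS: "\<And>i. 1 \<le> i \<Longrightarrow> i \<le> a \<Longrightarrow> ?v i = s i + (b+1)" using bS[OF s t] .
  have bT: "\<And>i. 1 \<le> i \<Longrightarrow> i \<le> b \<Longrightarrow> ?v (i + (a+1)) = t i + 1" using bT[OF s t] .
  have b1: "?v (a+1) = 1" using b1[OF s t] .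
  have sR: "\<And>i. 1 \<le> i \<Longrightarrow> i \<le> a \<Longrightarrow> 1 \<le> s i \<and> s i \<le> a" using sR[OF s t] .
  have tR: "\<And>i. 1 \<le> i \<Longrightarrow> i \<le> b \<Longrightarrow> 1 \<le> t i \<and> t i \<le> b" using tR[OF s t] .
  have eq: "?Dv = ?Ds \<union> ?A0 \<union> (\<lambda>i. i + (a+1)) ` ?Dt"
  proof (intro equalityI subsetI)
    fix x assume "x \<in> ?Dv"
    then have x: "1 \<le> x" "x < a+b+1" "?v (x+1) < ?v x" by auto
    show "x \<in> ?Ds \<union> ?A0 \<union> (\<lambda>i. i + (a+1)) ` ?Dt"
    proof (rule pos_cases[of x], use x in simp, use x in simp)
      assume "1 \<le> x" "x \<le> a"
      show ?thesis
      proof (cases "x = a")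
        case True then show ?thesis using x by simp
      next
        case False
        then have "s (x+1) < s x" using x bS[of x] bS[of "x+1"] \<open>x \<le> a\<close> by simp
        then show ?thesis using x False \<open>x \<le> a\<close> by simp
      qed
    next
      assume "x = a+1"
      then have "?v (x+1) = t 1 + 1" using bT[of 1] x by simp
      then show ?thesis using x tR[of 1] b1 \<open>x = a+1\<close> by simp
    next
      fix x' assume h: "1 \<le> x'" "x' \<le> b" "x = x' + (a+1)"
      then have "x' < b" using x by simp
      then have "t (x'+1) < t x'" using x h bT[of x'] bT[of "x'+1"] by simp
      then have "x' \<in> ?Dt" using h \<open>x' < b\<close> by simp
      then show ?thesis using h by blast
    qed
  next
    fix x assume "x \<in> ?Ds \<union> ?A0 \<union> (\<lambda>i. i + (a+1)) ` ?Dt"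
    then consider "x \<in> ?Ds" | "x \<in> ?A0" | x' where "x' \<in> ?Dt" "x = x' + (a+1)" by blast
    then show "x \<in> ?Dv"
    proof cases
      case 1 then show ?thesis using bS[of x] bS[of "x+1"] by simp
    next
      case 2 then have "x = a" "a > 0" by (auto split: if_splits)
      then show ?thesis using bS[of a] b1 sR[of a] by simp
    next
      case 3 then show ?thesis using bT[of x'] bT[of "x'+1"] by simp
    qed
  qed
  have "card ?Dv = card ?Ds + card ?A0 + card ((\<lambda>i. i + (a+1)) ` ?Dt)"
    unfolding eq by (subst card_Un_disjoint, auto)+
  moreover have "card ((\<lambda>i. i + (a+1)) ` ?Dt) = card ?Dt" by (rule card_image) (auto simp: inj_on_def)
  ultimately show ?thesis unfolding des_def by simp
qed

end

context
  fixes a b :: nat and s t :: "nat \<Rightarrow> nat"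
  assumes s: "s permutes {1..a}" and t: "t permutes {1..b}"
begin

abbreviation "v \<equiv> build a b s t"
abbreviation "X \<equiv> ext 0 0 (a+b+1) (build a b s t)"

lemma XS: "1 \<le> i \<Longrightarrow> i \<le> a \<Longrightarrow> X i = s i + (b+1)"
  using bS[OF s t, of i] by (simp add: ext_def)
lemma X1: "X (a+1) = 1"
  using b1[OF s t] by (simp add: ext_def)
lemma XT: "1 \<le> i \<Longrightarrow> i \<le> b \<Longrightarrow> X (i + (a+1)) = t i + 1"
  using bT[OF s t, of i] by (simp add: ext_def)
lemma X0: "X 0 = 0" by (simp add: ext_def)
lemma XN: "X (b + (a+2)) = 0" by (simp add: ext_def)
lemma ES: "1 \<le> i \<Longrightarrow> i \<le> a \<Longrightarrow> ext 0 0 a s i = s i" by (simp add: ext_def)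
lemma ES0: "ext 0 0 a s 0 = 0" "ext 0 0 a s (Suc a) = 0" by (simp_all add: ext_def)
lemma ET: "1 \<le> i \<Longrightarrow> i \<le> b \<Longrightarrow> ext 0 0 b t i = t i" by (simp add: ext_def)
lemma ET0: "ext 0 0 b t 0 = 0" "ext 0 0 b t (Suc b) = 0" by (simp_all add: ext_def)

lemma dd_build: "dd (a+b+1) v = dd a s + dd b t + (if a > 0 \<and> b = 0 then 1 else 0)"
proof -
  let ?Dv = "{i \<in> {1..a+b+1}. X (i-1) > X i \<and> X i > X (i+1)}"
  let ?Ds = "{i \<in> {1..a}. ext 0 0 a s (i-1) > ext 0 0 a s i \<and> ext 0 0 a s i > ext 0 0 a s (i+1)}"
  let ?Dt = "{i \<in> {1..b}. ext 0 0 b t (i-1) > ext 0 0 b t i \<and> ext 0 0 b t i > ext 0 0 b t (i+1)}"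
  let ?B0 = "(if a > 0 \<and> b = 0 then {a+1} else {})"
  have sR: "\<And>i. 1 \<le> i \<Longrightarrow> i \<le> a \<Longrightarrow> 1 \<le> s i \<and> s i \<le> a" using sR[OF s t] .
  have tR: "\<And>i. 1 \<le> i \<Longrightarrow> i \<le> b \<Longrightarrow> 1 \<le> t i \<and> t i \<le> b" using tR[OF s t] .
  have XS: "\<And>i. 1 \<le> i \<Longrightarrow> i \<le> a \<Longrightarrow> X i = s i + (b+1)" using XS .
  have XT: "\<And>i. 1 \<le> i \<Longrightarrow> i \<le> b \<Longrightarrow> X (i + (a+1)) = t i + 1" using XT .
  have X1: "X (a+1) = 1" using X1 .
  have key: "x \<in> ?Dv \<longleftrightarrow> x \<in> ?Ds \<or> x \<in> ?B0 \<or> (\<exists>x'. x' \<in> ?Dt \<and> x = x' + (a+1))"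
    if x: "1 \<le> x" "x \<le> a+b+1" for x
  proof (rule pos_cases[OF s t x])
    assume h: "1 \<le> x" "x \<le> a"
    have L: "(X (x-1) > X x) = (ext 0 0 a s (x-1) > ext 0 0 a s x)"
    proof (cases "x = 1")
      case True then show ?thesis using h XS[of x] ES[of x] X0 by (simp add: ES0)
    next
      case False then show ?thesis using h XS[of x] ES[of x] XS[of "x-1"] ES[of "x-1"] by simp
    qed
    have R: "(X x > X (x+1)) = (ext 0 0 a s x > ext 0 0 a s (x+1))"
    proof (cases "x = a")
      case True then show ?thesis using h XS[of x] ES[of x] X1 sR[of x] by (simp add: ES0)
    next
      case False then show ?thesis using h XS[of x] ES[of x] XS[of "x+1"] ES[of "x+1"] by simp
    qed
    show ?thesis using L R h by auto
  next
    assume h: "x = a+1"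
    have L: "(X (x-1) > X x) = (a > 0)"
    proof (cases "a = 0")
      case True then show ?thesis using h X0 X1 by simp
    next
      case False then show ?thesis using h XS[of a] X1 sR[of a] by simp
    qed
    have R: "(X x > X (x+1)) = (b = 0)"
    proof (cases "b = 0")
      case True then show ?thesis using h XN X1 by simp
    next
      case False then show ?thesis using h XT[of 1] tR[of 1] X1 by simp
    qed
    show ?thesis using L R h by auto
  next
    fix x' assume h: "1 \<le> x'" "x' \<le> b" "x = x' + (a+1)"
    have L: "(X (x-1) > X x) = (ext 0 0 b t (x'-1) > ext 0 0 b t x')"
    proof (cases "x' = 1")
      case True then show ?thesis using h XT[of x'] ET[of x'] X1 by (simp add: ET0)
    next
      case False
      then have "x - 1 = (x'-1) + (a+1)" using h by simp
      then show ?thesis using h False XT[of x'] ET[of x'] XT[of "x'-1"] ET[of "x'-1"] by simp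
    qed
    have R: "(X x > X (x+1)) = (ext 0 0 b t x' > ext 0 0 b t (x'+1))"
    proof (cases "x' = b")
      case True then show ?thesis using h XT[of x'] ET[of x'] XN tR[of b] by (simp add: ET0 add.commute)
    next
      case False
      then have "x + 1 = (x'+1) + (a+1)" using h by simp
      then show ?thesis using h False XT[of x'] ET[of x'] XT[of "x'+1"] ET[of "x'+1"] by simp
    qed
    show ?thesis using L R h x by auto
  qed
  have eq: "?Dv = ?Ds \<union> ?B0 \<union> (\<lambda>i. i + (a+1)) ` ?Dt"
  proof (intro equalityI subsetI)
    fix x assume "x \<in> ?Dv" then show "x \<in> ?Ds \<union> ?B0 \<union> (\<lambda>i. i + (a+1)) ` ?Dt"
      using key[of x] by auto
  next
    fix x assume xx: "x \<in> ?Ds \<union> ?B0 \<union> (\<lambda>i. i + (a+1)) ` ?Dt"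
    then have "1 \<le> x" "x \<le> a+b+1" by (auto split: if_splits)
    then show "x \<in> ?Dv" using key[of x] xx by blast
  qed
  have "card ?Dv = card ?Ds + card ?B0 + card ((\<lambda>i. i + (a+1)) ` ?Dt)"
    unfolding eq by (subst card_Un_disjoint, auto)+
  moreover have "card ((\<lambda>i. i + (a+1)) ` ?Dt) = card ?Dt" by (rule card_image) (auto simp: inj_on_def)
  ultimately show ?thesis unfolding dd_def by simp
qed

lemma adi_build: "adi (a+b+1) v = adi a s + adi b t + a * b + (if b > 0 then a else 0)"
proof -
  let ?N = "a+b+1"
  let ?Sv = "{(i, j). 1 \<le> i \<and> i < j \<and> j \<le> ?N \<and> v i > v j \<and>
      (X j < X (j+1) \<or> (\<exists>l. i < l \<and> l < j \<and> v l < v j))}"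
  let ?Ss = "{(i, j). 1 \<le> i \<and> i < j \<and> j \<le> a \<and> s i > s j \<and>
      (ext 0 0 a s j < ext 0 0 a s (j+1) \<or> (\<exists>l. i < l \<and> l < j \<and> s l < s j))}"
  let ?St = "{(i, j). 1 \<le> i \<and> i < j \<and> j \<le> b \<and> t i > t j \<and>
      (ext 0 0 b t j < ext 0 0 b t (j+1) \<or> (\<exists>l. i < l \<and> l < j \<and> t l < t j))}"
  let ?S2 = "(if b > 0 then {1..a} \<times> {a+1} else {})"
  let ?S3 = "{1..a} \<times> {a+2..?N}"
  let ?f = "\<lambda>(i::nat, j::nat). (i + (a+1), j + (a+1))"
  have sR: "\<And>i. 1 \<le> i \<Longrightarrow> i \<le> a \<Longrightarrow> 1 \<le> s i \<and> s i \<le> a" using sR[OF s t] .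
  have tR: "\<And>i. 1 \<le> i \<Longrightarrow> i \<le> b \<Longrightarrow> 1 \<le> t i \<and> t i \<le> b" using tR[OF s t] .
  have XS: "\<And>i. 1 \<le> i \<Longrightarrow> i \<le> a \<Longrightarrow> X i = s i + (b+1)" using XS .
  have XT: "\<And>i. 1 \<le> i \<Longrightarrow> i \<le> b \<Longrightarrow> X (i + (a+1)) = t i + 1" using XT .
  have X1: "X (a+1) = 1" using X1 .
  have vS: "\<And>i. 1 \<le> i \<Longrightarrow> i \<le> a \<Longrightarrow> v i = s i + (b+1)" using bS[OF s t] .
  have vT: "\<And>i. 1 \<le> i \<Longrightarrow> i \<le> b \<Longrightarrow> v (i + (a+1)) = t i + 1" using bT[OF s t] .
  have v1: "v (a+1) = 1" using b1[OF s t] .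
  have key: "(i,j) \<in> ?Sv \<longleftrightarrow> (i,j) \<in> ?Ss \<or> (i,j) \<in> ?S2 \<or> (i,j) \<in> ?S3 \<or>
     (\<exists>i' j'. (i',j') \<in> ?St \<and> i = i' + (a+1) \<and> j = j' + (a+1))"
    if ij: "1 \<le> i" "i \<le> ?N" "1 \<le> j" "j \<le> ?N" for i j
  proof (rule pos_cases[OF s t ij(1,2)])
    assume hi: "1 \<le> i" "i \<le> a"
    show ?thesis
    proof (rule pos_cases[OF s t ij(3,4)])
      assume hj: "1 \<le> j" "j \<le> a"
      have A: "(v i > v j) = (s i > s j)" using vS hi hj by simp
      have B: "(X j < X (j+1)) = (ext 0 0 a s j < ext 0 0 a s (j+1))"
      proof (cases "j = a")
        case True then show ?thesis using XS[of j] X1 hj ES[of j] by (simp add: ES0)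
      next
        case False then show ?thesis using XS[of j] XS[of "j+1"] hj ES[of j] ES[of "j+1"] by simp
      qed
      have C: "(\<exists>l. i < l \<and> l < j \<and> v l < v j) = (\<exists>l. i < l \<and> l < j \<and> s l < s j)"
      proof -
        have "\<And>l. i < l \<Longrightarrow> l < j \<Longrightarrow> (v l < v j) = (s l < s j)" using vS hi hj by simp
        then show ?thesis by blast
      qed
      show ?thesis using A B C hi hj by auto
    next
      assume hj: "j = a+1"
      have "(i,j) \<in> ?Sv \<longleftrightarrow> b > 0"
      proof
        assume m: "(i,j) \<in> ?Sv"
        have "\<not> (\<exists>l. i < l \<and> l < j \<and> v l < v j)" using vS v1 hj sR by fastforce
        then have "X j < X (j+1)" using m by blast
        then show "b > 0" using hj X1 by (cases "b = 0") (auto simp: ext_def)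
      next
        assume "b > 0"
        then have "X (j+1) = t 1 + 1" using XT[of 1] hj by simp
        then show "(i,j) \<in> ?Sv" using hi hj vS[of i] v1 X1 tR[of 1] \<open>b > 0\<close> sR[of i] by auto
      qed
      then show ?thesis using hi hj by auto
    next
      fix j' assume hj: "1 \<le> j'" "j' \<le> b" "j = j' + (a+1)"
      have "(i,j) \<in> ?Sv"
      proof -
        have "v i = s i + (b+1)" "v j = t j' + 1" "t j' \<le> b" "1 \<le> s i" using vS[of i] vT[of j'] hi hj tR[of j'] sR[of i] by simp_all
        then have "v i > v j" by linarith
        moreover have "v (a+1) < v j" using v1 vT[of j'] hi hj tR[of j'] by simp
        moreover have "i < a+1" "a+1 < j" "i < j" "j \<le> a+b+1" using hi hj by simp_all
        ultimately have "1 \<le> i \<and> i < j \<and> j \<le> a+b+1 \<and> v j < v i \<and> (X j < X (j+1) \<or> (\<exists>l. i < l \<and> l < j \<and> v l < v j))"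
          using hi by blast
        then show ?thesis by simp
      qed
      moreover have "(i,j) \<in> ?S3" using hi hj by simp
      ultimately show ?thesis by blast
    qed
  next
    assume hi: "i = a+1"
    have "(i,j) \<notin> ?Sv"
    proof
      assume "(i,j) \<in> ?Sv"
      then have "j > a+1" "v j < 1" using hi v1 by auto
      have "1 \<le> j - (a+1)" "j - (a+1) \<le> b" "j = (j - (a+1)) + (a+1)" using \<open>j > a+1\<close> ij by simp_all
      then obtain j' where "1 \<le> j'" "j' \<le> b" "j = j' + (a+1)" by blast
      then show False using vT \<open>v j < 1\<close> by simp
    qed
    then show ?thesis using hi by auto
  next
    fix i' assume hi: "1 \<le> i'" "i' \<le> b" "i = i' + (a+1)"
    show ?thesis
    proof (cases "j \<le> i")
      case True then show ?thesis using hi by auto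
    next
      case False
      then have "j = (j - (a+1)) + (a+1)" "i' < j - (a+1)" "j - (a+1) \<le> b" using hi ij by simp_all
      then obtain j' where hj: "j = j' + (a+1)" "i' < j'" "j' \<le> b" by blast
      have A: "(v i > v j) = (t i' > t j')" using vT hi hj by simp
      have B: "(X j < X (j+1)) = (ext 0 0 b t j' < ext 0 0 b t (j'+1))"
      proof (cases "j' = b")
        case True then show ?thesis using XT[of j'] XN hj hi ET[of j'] tR[of j']
          by (simp add: ET0 add.commute)
      next
        case False
        then have "j + 1 = (j'+1) + (a+1)" using hj by simp
        then show ?thesis using XT[of j'] XT[of "j'+1"] hj hi False ET[of j'] ET[of "j'+1"] by simp
      qed
      have C: "(\<exists>l. i < l \<and> l < j \<and> v l < v j) = (\<exists>l. i' < l \<and> l < j' \<and> t l < t j')"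
      proof
        assume "\<exists>l. i < l \<and> l < j \<and> v l < v j"
        then obtain l where l: "i < l" "l < j" "v l < v j" by blast
        then have "v (l - (a+1) + (a+1)) < v j" "i' < l - (a+1)" "l - (a+1) < j'" using hi hj by auto
        then have "t (l - (a+1)) < t j'" using vT[of "l - (a+1)"] vT[of j'] hi hj by simp
        then show "\<exists>l. i' < l \<and> l < j' \<and> t l < t j'" using \<open>i' < l - (a+1)\<close> \<open>l - (a+1) < j'\<close> by blast
      next
        assume "\<exists>l. i' < l \<and> l < j' \<and> t l < t j'"
        then obtain l where l: "i' < l" "l < j'" "t l < t j'" by blast
        then have "v (l + (a+1)) < v j" using vT[of l] vT[of j'] hi hj by simp
        moreover have "i < l + (a+1)" "l + (a+1) < j" using l hi hj by auto
        ultimately show "\<exists>l. i < l \<and> l < j \<and> v l < v j" by blast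
      qed
      have "(i,j) \<in> ?Sv \<longleftrightarrow> (i',j') \<in> ?St" using A B C hi hj by auto
      then show ?thesis using hi hj by auto
    qed
  qed
  have eq: "?Sv = ?Ss \<union> ?S2 \<union> ?S3 \<union> ?f ` ?St"
  proof (intro equalityI subsetI)
    fix x assume x: "x \<in> ?Sv"
    obtain i j where xij: "x = (i,j)" by fastforce
    have r: "1 \<le> i" "i \<le> ?N" "1 \<le> j" "j \<le> ?N" using x unfolding xij by auto
    have m: "(i,j) \<in> ?Sv" using x unfolding xij .
    have "(i,j) \<in> ?Ss \<or> (i,j) \<in> ?S2 \<or> (i,j) \<in> ?S3 \<or>
     (\<exists>i' j'. (i',j') \<in> ?St \<and> i = i' + (a+1) \<and> j = j' + (a+1))" using key[OF r] m by (rule iffD1)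
    then show "x \<in> ?Ss \<union> ?S2 \<union> ?S3 \<union> ?f ` ?St" unfolding xij
    proof (elim disjE exE conjE)
      fix i' j' assume h: "(i',j') \<in> ?St" "i = i' + (a+1)" "j = j' + (a+1)"
      have "(i,j) = ?f (i',j')" using h by simp
      then have "(i,j) \<in> ?f ` ?St" using h(1) by (rule image_eqI)
      then show "(i,j) \<in> ?Ss \<union> ?S2 \<union> ?S3 \<union> ?f ` ?St" by (rule UnI2)
    qed (rule UnI1, rule UnI1, rule UnI1, assumption, rule UnI1, rule UnI1, rule UnI2, assumption,
         rule UnI1, rule UnI2, assumption)
  next
    fix x assume x: "x \<in> ?Ss \<union> ?S2 \<union> ?S3 \<union> ?f ` ?St"
    obtain i j where xij: "x = (i,j)" by fastforce
    have r: "1 \<le> i" "i \<le> ?N" "1 \<le> j" "j \<le> ?N" using x unfolding xij by (auto split: if_splits)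
    have "(i,j) \<in> ?Ss \<or> (i,j) \<in> ?S2 \<or> (i,j) \<in> ?S3 \<or>
     (\<exists>i' j'. (i',j') \<in> ?St \<and> i = i' + (a+1) \<and> j = j' + (a+1))"
      using x unfolding xij by auto
    then show "x \<in> ?Sv" unfolding xij using key[OF r] by (rule iffD2[rotated])
  qed
  have fin: "finite ?Ss" "finite ?St"
    by (rule finite_subset[of _ "{1..a} \<times> {1..a}"], auto) (rule finite_subset[of _ "{1..b} \<times> {1..b}"], auto)
  have "card ?Sv = card ?Ss + card ?S2 + card ?S3 + card (?f ` ?St)"
    unfolding eq using fin by (subst card_Un_disjoint, auto split: if_splits)+
  moreover have "card (?f ` ?St) = card ?St" by (rule card_image) (auto simp: inj_on_def)
  moreover have "card ?S3 = a * b" by (simp add: card_cartesian_product)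
  moreover have "card ?S2 = (if b > 0 then a else 0)" by (simp add: card_cartesian_product)
  ultimately show ?thesis unfolding adi_def by simp
qed

end

lemma build_avoid:
  assumes s: "s permutes {1..a}" and t: "t permutes {1..b}"
    and as: "\<not> contains_pattern [2,1,3] a s" and at: "\<not> contains_pattern [2,1,3] b t"
  shows "\<not> contains_pattern [2,1,3] (a+b+1) (build a b s t)"
proof
  let ?v = "build a b s t"
  assume "contains_pattern [2,1,3] (a+b+1) ?v"
  then obtain i j k where h: "1\<le>i" "i<j" "j<k" "k\<le>a+b+1" "?v j < ?v i" "?v i < ?v k"
    unfolding contains_213 by blast
  have vS: "\<And>i. 1 \<le> i \<Longrightarrow> i \<le> a \<Longrightarrow> ?v i = s i + (b+1)" using bS[OF s t] .
  have vT: "\<And>i. 1 \<le> i \<Longrightarrow> i \<le> b \<Longrightarrow> ?v (i + (a+1)) = t i + 1" using bT[OF s t] .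
  have v1: "?v (a+1) = 1" using b1[OF s t] .
  have sR: "\<And>i. 1 \<le> i \<Longrightarrow> i \<le> a \<Longrightarrow> 1 \<le> s i \<and> s i \<le> a" using sR[OF s t] .
  have tR: "\<And>i. 1 \<le> i \<Longrightarrow> i \<le> b \<Longrightarrow> 1 \<le> t i \<and> t i \<le> b" using tR[OF s t] .
  have i1: "1 \<le> i" "i \<le> a+b+1" using h by auto
  show False
  proof (rule pos_cases[OF s t i1])
    assume hi: "1 \<le> i" "i \<le> a"
    show False
    proof (cases "k \<le> a")
      case True
      then have "s j < s i" "s i < s k" using h vS[of i] vS[of j] vS[of k] by auto
      then have "contains_pattern [2,1,3] a s" unfolding contains_213 using h True by blast
      then show False using as by blast
    next
      case False
      have ki: "1 \<le> k" "k \<le> a+b+1" using h by auto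
      have "?v k \<le> b+1"
      proof (rule pos_cases[OF s t ki])
        assume "1 \<le> k" "k \<le> a" then show ?thesis using False by simp
      next
        assume "k = a+1" then show ?thesis using v1 by simp
      next
        fix k' assume "1 \<le> k'" "k' \<le> b" "k = k' + (a+1)"
        then show ?thesis using vT[of k'] tR[of k'] by simp
      qed
      moreover have "?v i \<ge> b+2" using vS[of i] sR[of i] hi by simp
      ultimately show False using h by linarith
    qed
  next
    assume hi: "i = a+1"
    have "1 \<le> j - (a+1)" "j - (a+1) \<le> b" "j = (j - (a+1)) + (a+1)" using h hi by auto
    then have "?v j = t (j - (a+1)) + 1" using vT by metis
    then show False using h hi v1 by simp
  next
    fix i' assume hi: "1 \<le> i'" "i' \<le> b" "i = i' + (a+1)"
    define j' where "j' = j - (a+1)"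
    define k' where "k' = k - (a+1)"
    have jk: "j = j' + (a+1)" "k = k' + (a+1)" "i' < j'" "j' < k'" "k' \<le> b" "1 \<le> j'"
      using h hi unfolding j'_def k'_def by auto
    have "t j' < t i'" "t i' < t k'" using h hi jk vT[of i'] vT[of j'] vT[of k'] by auto
    then have "contains_pattern [2,1,3] b t" unfolding contains_213 using hi jk by blast
    then show False using at by blast
  qed
qed

lemma build_inj:
  assumes s: "s permutes {1..a}" and t: "t permutes {1..b}"
    and s': "s' permutes {1..a'}" and t': "t' permutes {1..b'}"
    and n: "a + b = a' + b'" and e: "build a b s t = build a' b' s' t'"
  shows "a = a' \<and> s = s' \<and> t = t'"
proof -
  have aa: "a = a'"
  proof (rule ccontr)
    assume "a \<noteq> a'"
    then consider "a < a'" | "a' < a" by linarith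
    then show False
    proof cases
      case 1
      have "build a b s t (a+1) = 1" using b1[OF s t] .
      moreover have "build a' b' s' t' (a+1) = s' (a+1) + (b'+1)" using bS[OF s' t', of "a+1"] 1 by simp
      moreover have "s' (a+1) \<ge> 1" using sR[OF s' t', of "a+1"] 1 by simp
      ultimately show False using e by simp
    next
      case 2
      have "build a' b' s' t' (a'+1) = 1" using b1[OF s' t'] .
      moreover have "build a b s t (a'+1) = s (a'+1) + (b+1)" using bS[OF s t, of "a'+1"] 2 by simp
      moreover have "s (a'+1) \<ge> 1" using sR[OF s t, of "a'+1"] 2 by simp
      ultimately show False using e by simp
    qed
  qed
  then have bb: "b = b'" using n by simp
  have "s = s'"
  proof
    fix i show "s i = s' i"
    proof (cases "1 \<le> i \<and> i \<le> a")
      case True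
      then have "build a b s t i = s i + (b+1)" "build a' b' s' t' i = s' i + (b'+1)"
        using bS[OF s t, of i] bS[OF s' t', of i] aa by auto
      then show ?thesis using e bb by simp
    next
      case False
      then show ?thesis using permutes_not_in[OF s, of i] permutes_not_in[OF s', of i] aa by auto
    qed
  qed
  moreover have "t = t'"
  proof
    fix i show "t i = t' i"
    proof (cases "1 \<le> i \<and> i \<le> b")
      case True
      then have "build a b s t (i + (a+1)) = t i + 1" "build a' b' s' t' (i + (a+1)) = t' i + 1"
        using bT[OF s t, of i] bT[OF s' t', of i] aa bb by auto
      then show ?thesis using e by simp
    next
      case False
      then show ?thesis using permutes_not_in[OF t, of i] permutes_not_in[OF t', of i] bb by auto
    qed
  qed
  ultimately show ?thesis using aa by simp
qed

lemma decomp: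
  assumes p: "p permutes {1..n}" and n: "n \<ge> 1" and av: "\<not> contains_pattern [2,1,3] n p"
  shows "\<exists>a b s t. a + b + 1 = n \<and> s permutes {1..a} \<and> t permutes {1..b} \<and>
     \<not> contains_pattern [2,1,3] a s \<and> \<not> contains_pattern [2,1,3] b t \<and> p = build a b s t"
proof -
  have pR: "\<And>i. 1 \<le> i \<Longrightarrow> i \<le> n \<Longrightarrow> 1 \<le> p i \<and> p i \<le> n" using perm_range[OF p] by auto
  have pinj: "\<And>i j. p i = p j \<Longrightarrow> i = j" using permutes_inj[OF p] by (simp add: inj_eq)
  define k where "k = inv p 1"
  have pk: "p k = 1" unfolding k_def using permutes_inverses(1)[OF p] by simp
  have kR: "1 \<le> k" "k \<le> n"
  proof -
    have "k \<in> {1..n}"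
    proof (rule ccontr)
      assume "k \<notin> {1..n}" then have "p k = k" using permutes_not_in[OF p] by blast
      then have "k = 1" using pk by simp
      then show False using \<open>k \<notin> {1..n}\<close> n by simp
    qed
    then show "1 \<le> k" "k \<le> n" by auto
  qed
  define a where "a = k - 1"
  define b where "b = n - k"
  have ab: "a + b + 1 = n" "k = a + 1" unfolding a_def b_def using kR by auto
  have p2: "\<And>i. 1 \<le> i \<Longrightarrow> i \<le> n \<Longrightarrow> i \<noteq> k \<Longrightarrow> p i \<ge> 2"
  proof -
    fix i assume "1 \<le> i" "i \<le> n" "i \<noteq> k"
    then have "p i \<noteq> 1" using pk pinj by metis
    then show "p i \<ge> 2" using pR[of i] \<open>1 \<le> i\<close> \<open>i \<le> n\<close> by simp
  qed
  have sep: "\<And>i j. 1 \<le> i \<Longrightarrow> i \<le> a \<Longrightarrow> a+2 \<le> j \<Longrightarrow> j \<le> n \<Longrightarrow> p j < p i"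
  proof (rule ccontr)
    fix i j assume h: "1 \<le> i" "i \<le> a" "a+2 \<le> j" "j \<le> n" "\<not> p j < p i"
    then have "p i \<noteq> p j" using pinj[of i j] by auto
    then have "p i < p j" using h by simp
    moreover have "p k < p i" using pk p2[of i] h ab by simp
    moreover have "i < k" "k < j" using h ab by auto
    ultimately have "contains_pattern [2,1,3] n p" unfolding contains_213 using h by blast
    then show False using av by blast
  qed
  have hiS: "\<And>i. 1 \<le> i \<Longrightarrow> i \<le> a \<Longrightarrow> p i \<ge> b+2"
  proof -
    fix i assume i: "1 \<le> i" "i \<le> a"
    have "p ` {a+2..n} \<subseteq> {2..<p i}"
    proof
      fix y assume "y \<in> p ` {a+2..n}"
      then obtain j where j: "a+2 \<le> j" "j \<le> n" "y = p j" by auto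
      then show "y \<in> {2..<p i}" using sep[OF i j(1,2)] p2[of j] ab by auto
    qed
    then have "card (p ` {a+2..n}) \<le> card {2..<p i}" by (intro card_mono) auto
    moreover have "card (p ` {a+2..n}) = b" using ab
      by (subst card_image) (auto intro: inj_on_subset[OF permutes_inj_on[OF p]])
    moreover have "p i \<ge> 2" using p2[of i] i ab by simp
    ultimately show "p i \<ge> b+2" by simp
  qed
  have loT: "\<And>j. a+2 \<le> j \<Longrightarrow> j \<le> n \<Longrightarrow> p j \<le> b+1"
  proof -
    fix j assume j: "a+2 \<le> j" "j \<le> n"
    have "p ` {1..a} \<subseteq> {p j<..n}"
    proof
      fix y assume "y \<in> p ` {1..a}"
      then obtain i where i: "1 \<le> i" "i \<le> a" "y = p i" by auto
      then show "y \<in> {p j<..n}" using sep[OF i(1,2) j] pR[of i] ab by auto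
    qed
    then have "card (p ` {1..a}) \<le> card {p j<..n}" by (intro card_mono) auto
    moreover have "card (p ` {1..a}) = a"
      by (subst card_image) (auto intro: inj_on_subset[OF permutes_inj_on[OF p]])
    moreover have "p j \<le> n" using pR[of j] j ab by simp
    ultimately show "p j \<le> b+1" using ab by simp
  qed
  define s where "s = (\<lambda>i. if i \<in> {1..a} then p i - (b+1) else i)"
  define t where "t = (\<lambda>i. if i \<in> {1..b} then p (i + (a+1)) - 1 else i)"
  have sv: "\<And>i. 1 \<le> i \<Longrightarrow> i \<le> a \<Longrightarrow> s i + (b+1) = p i" unfolding s_def using hiS by force
  have tv: "\<And>i. 1 \<le> i \<Longrightarrow> i \<le> b \<Longrightarrow> t i + 1 = p (i + (a+1))"
  proof -
    fix i assume i: "1 \<le> i" "i \<le> b"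
    have "p (i + (a+1)) \<ge> 2" using p2[of "i + (a+1)"] i ab by simp
    then show "t i + 1 = p (i + (a+1))" unfolding t_def using i by simp
  qed
  have sP: "s permutes {1..a}"
  proof (rule bij_imp_permutes)
    have inj: "inj_on s {1..a}"
    proof (rule inj_onI)
      fix x y assume "x \<in> {1..a}" "y \<in> {1..a}" "s x = s y"
      then have "p x = p y" using sv[of x] sv[of y] by force
      then show "x = y" by (rule pinj)
    qed
    moreover have "s ` {1..a} \<subseteq> {1..a}"
    proof
      fix y assume "y \<in> s ` {1..a}"
      then obtain i where i: "1 \<le> i" "i \<le> a" "y = s i" by auto
      have "p i \<le> n" "p i \<ge> b+2" using pR[of i] hiS[of i] i ab by auto
      then show "y \<in> {1..a}" using sv[of i] i ab by auto
    qed
    ultimately show "bij_betw s {1..a} {1..a}" unfolding bij_betw_def using endo_inj_surj[of "{1..a}" s] by auto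
  qed (auto simp: s_def)
  have tP: "t permutes {1..b}"
  proof (rule bij_imp_permutes)
    have inj: "inj_on t {1..b}"
    proof (rule inj_onI)
      fix x y assume "x \<in> {1..b}" "y \<in> {1..b}" "t x = t y"
      then have "p (x + (a+1)) = p (y + (a+1))" using tv[of x] tv[of y] by force
      then show "x = y" using pinj by fastforce
    qed
    moreover have "t ` {1..b} \<subseteq> {1..b}"
    proof
      fix y assume "y \<in> t ` {1..b}"
      then obtain i where i: "1 \<le> i" "i \<le> b" "y = t i" by auto
      have "p (i + (a+1)) \<le> b+1" "p (i + (a+1)) \<ge> 2" using loT[of "i + (a+1)"] p2[of "i + (a+1)"] i ab by auto
      then show "y \<in> {1..b}" using tv[of i] i ab by auto
    qed
    ultimately show "bij_betw t {1..b} {1..b}" unfolding bij_betw_def using endo_inj_surj[of "{1..b}" t] by auto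
  qed (auto simp: t_def)
  have pb: "p = build a b s t"
  proof
    fix i show "p i = build a b s t i"
    proof (cases "1 \<le> i \<and> i \<le> n")
      case False
      then have "p i = i" using permutes_not_in[OF p] by auto
      moreover have "build a b s t i = i" using bO[OF sP tP, of i] False ab by auto
      ultimately show ?thesis by simp
    next
      case True
      then have i1: "1 \<le> i" "i \<le> a+b+1" using ab by auto
      show ?thesis
      proof (rule pos_cases[OF sP tP i1])
        assume "1 \<le> i" "i \<le> a" then show ?thesis using bS[OF sP tP, of i] sv[of i] by simp
      next
        assume "i = a+1" then show ?thesis using b1[OF sP tP] pk ab by simp
      next
        fix i' assume "1 \<le> i'" "i' \<le> b" "i = i' + (a+1)"
        then show ?thesis using bT[OF sP tP, of i'] tv[of i'] by simp
      qed
    qed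
  qed
  have sA: "\<not> contains_pattern [2,1,3] a s"
  proof
    assume "contains_pattern [2,1,3] a s"
    then obtain i j k where h: "1\<le>i" "i<j" "j<k" "k\<le>a" "s j < s i" "s i < s k"
      unfolding contains_213 by blast
    have "p j < p i" "p i < p k" using h sv[of i] sv[of j] sv[of k] by force+
    then have "contains_pattern [2,1,3] n p" unfolding contains_213 using h ab
      by (intro exI[of _ i] exI[of _ j] exI[of _ k]) auto
    then show False using av by blast
  qed
  have tA: "\<not> contains_pattern [2,1,3] b t"
  proof
    assume "contains_pattern [2,1,3] b t"
    then obtain i j k where h: "1\<le>i" "i<j" "j<k" "k\<le>b" "t j < t i" "t i < t k"
      unfolding contains_213 by blast
    have "p (j + (a+1)) < p (i + (a+1))" "p (i + (a+1)) < p (k + (a+1))"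
      using h tv[of i] tv[of j] tv[of k] by force+
    then have "contains_pattern [2,1,3] n p" unfolding contains_213 using h ab
      by (intro exI[of _ "i + (a+1)"] exI[of _ "j + (a+1)"] exI[of _ "k + (a+1)"]) auto
    then show False using av by blast
  qed
  show ?thesis using ab sP tP sA tA pb by blast
qed

abbreviation "Av n \<equiv> avoiders n [2,1,3]"

lemma av_finite: "finite (avoiders n pat)"
  by (rule finite_subset[OF _ finite_permutations[of "{1..n}"]]) (auto simp: avoiders_def)

lemma av_decomp:
  assumes n: "n \<ge> 1"
  shows "Av n = (\<Union>a\<in>{..<n}. (\<lambda>(s,t). build a (n-1-a) s t) ` (Av a \<times> Av (n-1-a)))"
proof (intro equalityI subsetI)
  fix p assume "p \<in> Av n"
  then have p: "p permutes {1..n}" "\<not> contains_pattern [2,1,3] n p" by (auto simp: avoiders_def)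
  obtain a b s t where h: "a + b + 1 = n" "s permutes {1..a}" "t permutes {1..b}"
     "\<not> contains_pattern [2,1,3] a s" "\<not> contains_pattern [2,1,3] b t" "p = build a b s t"
    using decomp[OF p(1) n p(2)] by blast
  have "b = n - 1 - a" using h by simp
  then have "p \<in> (\<lambda>(s,t). build a (n-1-a) s t) ` (Av a \<times> Av (n-1-a))"
    using h by (auto simp: avoiders_def)
  moreover have "a \<in> {..<n}" using h by auto
  ultimately show "p \<in> (\<Union>a\<in>{..<n}. (\<lambda>(s,t). build a (n-1-a) s t) ` (Av a \<times> Av (n-1-a)))" by blast
next
  fix p assume "p \<in> (\<Union>a\<in>{..<n}. (\<lambda>(s,t). build a (n-1-a) s t) ` (Av a \<times> Av (n-1-a)))"
  then obtain a s t where h: "a < n" "s \<in> Av a" "t \<in> Av (n-1-a)" "p = build a (n-1-a) s t" by auto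
  have s: "s permutes {1..a}" "\<not> contains_pattern [2,1,3] a s" using h by (auto simp: avoiders_def)
  have t: "t permutes {1..n-1-a}" "\<not> contains_pattern [2,1,3] (n-1-a) t" using h by (auto simp: avoiders_def)
  have nn: "a + (n-1-a) + 1 = n" using h by simp
  show "p \<in> Av n"
    using build_permutes[OF s(1) t(1)] build_avoid[OF s(1) t(1) s(2) t(2)] h(4) nn
    by (simp add: avoiders_def)
qed

lemma sum_decomp:
  assumes n: "n \<ge> 1"
  shows "(\<Sum>p\<in>Av n. g p) = (\<Sum>a<n. \<Sum>s\<in>Av a. \<Sum>t\<in>Av (n-1-a). g (build a (n-1-a) s t))"
proof -
  let ?B = "\<lambda>a. (\<lambda>(s,t). build a (n-1-a) s t)"
  have inj: "inj_on (?B a) (Av a \<times> Av (n-1-a))" if "a < n" for a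
  proof (rule inj_onI, clarify)
    fix s t s' t' assume "s \<in> Av a" "t \<in> Av (n-1-a)" "s' \<in> Av a" "t' \<in> Av (n-1-a)"
      and e: "build a (n-1-a) s t = build a (n-1-a) s' t'"
    then show "s = s' \<and> t = t'" using build_inj[of s a t "n-1-a" s' a t' "n-1-a"] e
      by (auto simp: avoiders_def)
  qed
  have disj: "?B a ` (Av a \<times> Av (n-1-a)) \<inter> ?B a' ` (Av a' \<times> Av (n-1-a')) = {}"
    if "a < n" "a' < n" "a \<noteq> a'" for a a'
  proof (rule ccontr)
    assume "?B a ` (Av a \<times> Av (n-1-a)) \<inter> ?B a' ` (Av a' \<times> Av (n-1-a')) \<noteq> {}"
    then obtain s t s' t' where st: "s \<in> Av a" "t \<in> Av (n-1-a)" "s' \<in> Av a'" "t' \<in> Av (n-1-a')"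
      and e: "build a (n-1-a) s t = build a' (n-1-a') s' t'" by auto
    have "a + (n-1-a) = a' + (n-1-a')" using that by simp
    then have "a = a'" using build_inj[of s a t "n-1-a" s' a' t' "n-1-a'"] e st by (auto simp: avoiders_def)
    then show False using that by simp
  qed
  have "(\<Sum>p\<in>Av n. g p) = (\<Sum>a<n. \<Sum>p\<in>?B a ` (Av a \<times> Av (n-1-a)). g p)"
    unfolding av_decomp[OF n]
  proof (rule sum.UNION_disjoint)
    show "\<forall>i\<in>{..<n}. \<forall>j\<in>{..<n}. i \<noteq> j \<longrightarrow> ?B i ` (Av i \<times> Av (n-1-i)) \<inter> ?B j ` (Av j \<times> Av (n-1-j)) = {}"
      using disj by blast
  qed (auto simp: av_finite)
  also have "\<dots> = (\<Sum>a<n. \<Sum>x\<in>Av a \<times> Av (n-1-a). g (?B a x))"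
  proof (rule sum.cong[OF refl])
    fix a assume "a \<in> {..<n}"
    then have "sum g (?B a ` (Av a \<times> Av (n-1-a))) = sum (g \<circ> ?B a) (Av a \<times> Av (n-1-a))"
      using inj by (intro sum.reindex) simp
    then show "sum g (?B a ` (Av a \<times> Av (n-1-a))) = (\<Sum>x\<in>Av a \<times> Av (n-1-a). g (?B a x))"
      by (simp add: comp_def)
  qed
  also have "\<dots> = (\<Sum>a<n. \<Sum>s\<in>Av a. \<Sum>t\<in>Av (n-1-a). g (build a (n-1-a) s t))"
    by (rule sum.cong[OF refl]) (simp add: sum.cartesian_product split_def)
  finally show ?thesis .
qed

lemma av0: "Av 0 = {id}"
proof -
  have "\<not> contains_pattern [2,1,3] 0 id" unfolding contains_213 by auto
  then show ?thesis by (auto simp: avoiders_def)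
qed

lemma stats0: "des 0 p = 0" "adi 0 p = 0" "dd 0 p = 0"
proof -
  have "{(i, j). 1 \<le> i \<and> i < j \<and> j \<le> (0::nat) \<and> p i > p j \<and>
      (ext 0 0 0 p j < ext 0 0 0 p (j+1) \<or> (\<exists>l. i < l \<and> l < j \<and> p l < p j))} = {}" by auto
  then show "adi 0 p = 0" unfolding adi_def by (simp only: card.empty)
qed (auto simp: des_def dd_def)

lemma des_bound:
  assumes p: "p permutes {1..n}" and d: "dd n p = 0"
  shows "2 * des n p \<le> n - 1"
proof -
  let ?E = "ext 0 0 n p"
  have fin: "finite {i \<in> {1..n}. ?E (i-1) > ?E i \<and> ?E i > ?E (i+1)}" by simp
  have nodd: "\<And>i. 1 \<le> i \<Longrightarrow> i \<le> n \<Longrightarrow> \<not> (?E (i-1) > ?E i \<and> ?E i > ?E (i+1))"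
    using d fin unfolding dd_def by auto
  let ?D = "{i \<in> {1..<n}. p (i+1) < p i}"
  have pR: "\<And>i. 1 \<le> i \<Longrightarrow> i \<le> n \<Longrightarrow> 1 \<le> p i" using perm_range[OF p] by auto
  have sub: "Suc ` ?D \<subseteq> {1..<n}"
  proof
    fix y assume "y \<in> Suc ` ?D"
    then obtain i where i: "1 \<le> i" "i < n" "p (i+1) < p i" "y = Suc i" by auto
    have "Suc i \<noteq> n"
    proof
      assume e: "Suc i = n"
      have "?E (Suc i - 1) = p i" "?E (Suc i) = p (Suc i)" "?E (Suc i + 1) = 0"
        using i e by (auto simp: ext_def)
      moreover have "1 \<le> p (Suc i)" using pR[of "Suc i"] e by simp
      ultimately show False using nodd[of "Suc i"] i e by simp
    qed
    then show "y \<in> {1..<n}" using i by simp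
  qed
  have dis: "?D \<inter> Suc ` ?D = {}"
  proof (rule ccontr)
    assume "?D \<inter> Suc ` ?D \<noteq> {}"
    then obtain j where j: "Suc j \<in> ?D" "j \<in> ?D" by auto
    then have h: "1 \<le> j" "Suc j < n" "p (Suc j) < p j" "p (Suc (Suc j)) < p (Suc j)" by auto
    have "?E (Suc j - 1) = p j" "?E (Suc j) = p (Suc j)" "?E (Suc j + 1) = p (Suc (Suc j))"
      using h by (auto simp: ext_def)
    then show False using nodd[of "Suc j"] h by simp
  qed
  have "card (?D \<union> Suc ` ?D) \<le> card {1..<n}"
    using sub by (intro card_mono) auto
  moreover have "card (?D \<union> Suc ` ?D) = card ?D + card (Suc ` ?D)"
    using dis by (intro card_Un_disjoint) auto
  moreover have "card (Suc ` ?D) = card ?D" by (rule card_image) simp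
  ultimately show ?thesis unfolding des_def by simp
qed

definition wF :: "'a::comm_ring_1 \<Rightarrow> 'a \<Rightarrow> nat \<Rightarrow> (nat \<Rightarrow> nat) \<Rightarrow> 'a" where
  "wF y z m p = y ^ des m p * z ^ adi m p"
definition wG :: "'a::comm_ring_1 \<Rightarrow> 'a \<Rightarrow> nat \<Rightarrow> (nat \<Rightarrow> nat) \<Rightarrow> 'a" where
  "wG y z m p = (if dd m p = 0 then y ^ des m p * (1 + y) ^ (m - 1 - 2 * des m p) * z ^ adi m p else 0)"
definition FA :: "'a::comm_ring_1 \<Rightarrow> 'a \<Rightarrow> nat \<Rightarrow> 'a" where "FA y z m = (\<Sum>p\<in>Av m. wF y z m p)"
definition GA :: "'a::comm_ring_1 \<Rightarrow> 'a \<Rightarrow> nat \<Rightarrow> 'a" where "GA y z m = (\<Sum>p\<in>Av m. wG y z m p)"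

lemma avP: "p \<in> avoiders n pat \<Longrightarrow> p permutes {1..n}" by (simp add: avoiders_def)

lemma termF:
  assumes s: "s permutes {1..a}" and t: "t permutes {1..b}"
  shows "wF y z (a+b+1) (build a b s t) =
    (y ^ (if a > 0 then 1 else 0) * z ^ (a*b + (if b > 0 then a else 0))) * (wF y z a s * wF y z b t)"
  unfolding wF_def des_build[OF s t] adi_build[OF s t] power_add by (simp add: ac_simps)

lemma FA0: "FA y z 0 = 1" unfolding FA_def av0 by (simp add: wF_def stats0)
lemma GA0: "GA y z 0 = 1" unfolding GA_def av0 by (simp add: wG_def stats0)

lemma FA_rec:
  assumes n: "n \<ge> 1"
  shows "FA y z n = (\<Sum>a<n. (y ^ (if a > 0 then 1 else 0) * z ^ (a*(n-1-a) + (if n-1-a > 0 then a else 0)))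
                       * (FA y z a * FA y z (n-1-a)))"
proof -
  have "FA y z n = (\<Sum>a<n. \<Sum>s\<in>Av a. \<Sum>t\<in>Av (n-1-a). wF y z n (build a (n-1-a) s t))"
    unfolding FA_def by (rule sum_decomp[OF n])
  also have "\<dots> = (\<Sum>a<n. (y ^ (if a > 0 then 1 else 0) * z ^ (a*(n-1-a) + (if n-1-a > 0 then a else 0)))
                       * (FA y z a * FA y z (n-1-a)))"
  proof (rule sum.cong[OF refl])
    fix a assume a: "a \<in> {..<n}"
    let ?c = "y ^ (if a > 0 then 1 else 0) * z ^ (a*(n-1-a) + (if n-1-a > 0 then a else 0))"
    have nn: "a + (n-1-a) + 1 = n" using a by simp
    have "(\<Sum>s\<in>Av a. \<Sum>t\<in>Av (n-1-a). wF y z n (build a (n-1-a) s t))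
        = (\<Sum>s\<in>Av a. \<Sum>t\<in>Av (n-1-a). ?c * (wF y z a s * wF y z (n-1-a) t))"
      using termF[of _ a _ "n-1-a" y z] nn by (intro sum.cong refl) (metis avP)
    also have "\<dots> = ?c * (FA y z a * FA y z (n-1-a))"
      unfolding FA_def sum_product by (simp add: sum_distrib_left)
    finally show "(\<Sum>s\<in>Av a. \<Sum>t\<in>Av (n-1-a). wF y z n (build a (n-1-a) s t)) = ?c * (FA y z a * FA y z (n-1-a))" .
  qed
  finally show ?thesis .
qed

lemma termG_a0:
  assumes s: "s permutes {1..0}" and t: "t permutes {1..b}" and b: "b \<ge> 1"
  shows "wG y z (b+1) (build 0 b s t) = (1 + y) * wG y z b t"
proof -
  have D: "des (b+1) (build 0 b s t) = des b t" using des_build[OF s t] stats0 by simp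
  have A: "adi (b+1) (build 0 b s t) = adi b t" using adi_build[OF s t] stats0 by simp
  have DD: "dd (b+1) (build 0 b s t) = dd b t" using dd_build[OF s t] stats0 by simp
  show ?thesis
  proof (cases "dd b t = 0")
    case True
    have "2 * des b t \<le> b - 1" using des_bound[OF t True] .
    then have "b + 1 - 1 - 2 * des b t = Suc (b - 1 - 2 * des b t)" using b by simp
    then show ?thesis unfolding wG_def D A DD using True by (simp add: ac_simps)
  next
    case False then show ?thesis unfolding wG_def D A DD by simp
  qed
qed

lemma termG_b0:
  assumes s: "s permutes {1..a}" and t: "t permutes {1..0}" and a: "a \<ge> 1"
  shows "wG y z (a+1) (build a 0 s t) = 0"
proof -
  have "dd (a+0+1) (build a 0 s t) \<noteq> 0" using dd_build[OF s t] a by simp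
  then show ?thesis unfolding wG_def by simp
qed

lemma termG_mid:
  assumes s: "s permutes {1..a}" and t: "t permutes {1..b}" and a: "a \<ge> 1" and b: "b \<ge> 1"
  shows "wG y z (a+b+1) (build a b s t) = (y * z ^ (a*b + a)) * (wG y z a s * wG y z b t)"
proof (cases "dd a s = 0 \<and> dd b t = 0")
  case True
  have DD: "dd (a+b+1) (build a b s t) = 0" using dd_build[OF s t] True b by simp
  have D: "des (a+b+1) (build a b s t) = des a s + des b t + 1" using des_build[OF s t] a by simp
  have A: "adi (a+b+1) (build a b s t) = adi a s + adi b t + (a*b + a)" using adi_build[OF s t] b by simp
  have bs: "2 * des a s \<le> a - 1" using des_bound[OF s] True by simp
  have bt: "2 * des b t \<le> b - 1" using des_bound[OF t] True by simp
  have E: "a + b + 1 - 1 - 2 * (des a s + des b t + 1) = (a - 1 - 2 * des a s) + (b - 1 - 2 * des b t)"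
    using bs bt a b by simp
  show ?thesis unfolding wG_def DD D A E using True by (simp add: power_add ac_simps)
next
  case False
  have "dd (a+b+1) (build a b s t) \<noteq> 0" using dd_build[OF s t] False by simp
  then show ?thesis unfolding wG_def using False by auto
qed

lemma GA1: "GA y z 1 = 1"
proof -
  have "GA y z 1 = (\<Sum>a<1. \<Sum>s\<in>Av a. \<Sum>t\<in>Av (1-1-a). wG y z 1 (build a (1-1-a) s t))"
    unfolding GA_def by (rule sum_decomp) simp
  also have "\<dots> = wG y z 1 (build 0 0 id id)" using av0 by simp
  also have "\<dots> = 1"
  proof -
    have s: "id permutes {1..0::nat}" by simp
    have "des (0+0+1) (build 0 0 id id) = 0" "adi (0+0+1) (build 0 0 id id) = 0"
      "dd (0+0+1) (build 0 0 id id) = 0"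
      using des_build[OF s s] adi_build[OF s s] dd_build[OF s s] stats0 by simp_all
    then show ?thesis unfolding wG_def by simp
  qed
  finally show ?thesis .
qed

lemma GA_rec:
  assumes n: "n \<ge> 2"
  shows "GA y z n = (\<Sum>a<n. (if a = 0 then (1+y) * GA y z (n-1) else if a = n-1 then 0
      else (y * z ^ (a*(n-1-a) + a)) * (GA y z a * GA y z (n-1-a))))"
proof -
  have "GA y z n = (\<Sum>a<n. \<Sum>s\<in>Av a. \<Sum>t\<in>Av (n-1-a). wG y z n (build a (n-1-a) s t))"
    unfolding GA_def by (rule sum_decomp) (use n in simp)
  also have "\<dots> = (\<Sum>a<n. (if a = 0 then (1+y) * GA y z (n-1) else if a = n-1 then 0
      else (y * z ^ (a*(n-1-a) + a)) * (GA y z a * GA y z (n-1-a))))"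
  proof (rule sum.cong[OF refl])
    fix a assume a: "a \<in> {..<n}"
    show "(\<Sum>s\<in>Av a. \<Sum>t\<in>Av (n-1-a). wG y z n (build a (n-1-a) s t)) =
      (if a = 0 then (1+y) * GA y z (n-1) else if a = n-1 then 0
      else (y * z ^ (a*(n-1-a) + a)) * (GA y z a * GA y z (n-1-a)))"
    proof (cases "a = 0")
      case True
      have "(\<Sum>s\<in>Av a. \<Sum>t\<in>Av (n-1-a). wG y z n (build a (n-1-a) s t)) =
            (\<Sum>t\<in>Av (n-1). wG y z n (build 0 (n-1) id t))"
        using True av0 by simp
      also have "\<dots> = (\<Sum>t\<in>Av (n-1). (1+y) * wG y z (n-1) t)"
      proof (rule sum.cong[OF refl])
        fix t assume "t \<in> Av (n-1)"
        then have t: "t permutes {1..n-1}" by (rule avP)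
        have "wG y z (n-1+1) (build 0 (n-1) id t) = (1+y) * wG y z (n-1) t"
          by (rule termG_a0) (use t n in auto)
        then show "wG y z n (build 0 (n-1) id t) = (1+y) * wG y z (n-1) t" using n by simp
      qed
      also have "\<dots> = (1+y) * GA y z (n-1)" unfolding GA_def by (simp add: sum_distrib_left)
      finally show ?thesis using True by simp
    next
      case a0: False
      show ?thesis
      proof (cases "a = n-1")
        case True
        have "wG y z n (build a (n-1-a) s t) = 0" if "s \<in> Av a" "t \<in> Av (n-1-a)" for s t
        proof -
          have s: "s permutes {1..a}" using avP[OF that(1)] .
          have t: "t permutes {1..0}" using avP[OF that(2)] True n by simp
          have "wG y z (a+1) (build a 0 s t) = 0" by (rule termG_b0[OF s t]) (use a0 in simp)
          then show ?thesis using True n by simp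
        qed
        then show ?thesis using a0 True by simp
      next
        case False
        let ?c = "y * z ^ (a*(n-1-a) + a)"
        have nn: "a + (n-1-a) + 1 = n" using a by simp
        have "(\<Sum>s\<in>Av a. \<Sum>t\<in>Av (n-1-a). wG y z n (build a (n-1-a) s t))
            = (\<Sum>s\<in>Av a. \<Sum>t\<in>Av (n-1-a). ?c * (wG y z a s * wG y z (n-1-a) t))"
        proof (intro sum.cong refl)
          fix s t assume "s \<in> Av a" "t \<in> Av (n-1-a)"
          then have s: "s permutes {1..a}" and t: "t permutes {1..n-1-a}" using avP by auto
          have "wG y z (a+(n-1-a)+1) (build a (n-1-a) s t) = ?c * (wG y z a s * wG y z (n-1-a) t)"
            by (rule termG_mid[OF s t]) (use a0 False a in auto)
          then show "wG y z n (build a (n-1-a) s t) = ?c * (wG y z a s * wG y z (n-1-a) t)"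
            unfolding nn .
        qed
        also have "\<dots> = ?c * (GA y z a * GA y z (n-1-a))"
          unfolding GA_def sum_product by (simp add: sum_distrib_left)
        finally show ?thesis using a0 False by simp
      qed
    qed
  qed
  finally show ?thesis .
qed

lemma split_sum:
  fixes n :: nat
  assumes n: "n \<ge> 2"
  shows "(\<Sum>a<n. f a) = f 0 + f (n-1) + (\<Sum>a\<in>{1..<n-1}. f a)"
proof -
  have "{..<n} = insert 0 (insert (n-1) {1..<n-1})" using n by auto
  then show ?thesis using n by (simp add: add.assoc)
qed

lemma FA_GA: "FA y z n = GA y z n"
proof (induction n rule: less_induct)
  case (less n)
  consider "n = 0" | "n = 1" | "n \<ge> 2" by linarith
  then show ?case
  proof cases
    case 1 then show ?thesis using FA0[of y z] GA0[of y z] by simp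
  next
    case 2 then show ?thesis using FA_rec[of 1 y z] FA0[of y z] GA1[of y z] by simp
  next
    case 3
    have F: "FA y z n = FA y z (n-1) + y * FA y z (n-1) +
        (\<Sum>a\<in>{1..<n-1}. (y * z ^ (a*(n-1-a) + a)) * (FA y z a * FA y z (n-1-a)))"
    proof -
      have "FA y z n = (\<Sum>a<n. (y ^ (if a > 0 then 1 else 0) * z ^ (a*(n-1-a) + (if n-1-a > 0 then a else 0)))
                       * (FA y z a * FA y z (n-1-a)))" using FA_rec[of n y z] 3 by simp
      also have "\<dots> = FA y z (n-1) + y * FA y z (n-1) +
        (\<Sum>a\<in>{1..<n-1}. (y * z ^ (a*(n-1-a) + a)) * (FA y z a * FA y z (n-1-a)))"
      proof -
        have m: "\<And>a. a \<in> {1..<n-1} \<Longrightarrow> (y ^ (if a > 0 then 1 else 0) * z ^ (a*(n-1-a) + (if n-1-a > 0 then a else 0)))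
                       * (FA y z a * FA y z (n-1-a)) = (y * z ^ (a*(n-1-a) + a)) * (FA y z a * FA y z (n-1-a))"
          by auto
        have f0: "FA y z 0 = 1" by (rule FA0)
        have s: "(\<Sum>a\<in>{1..<n-1}. (y ^ (if a > 0 then 1 else 0) * z ^ (a*(n-1-a) + (if n-1-a > 0 then a else 0)))
                       * (FA y z a * FA y z (n-1-a))) = (\<Sum>a\<in>{1..<n-1}. (y * z ^ (a*(n-1-a) + a)) * (FA y z a * FA y z (n-1-a)))"
          by (rule sum.cong[OF refl m])
        show ?thesis unfolding split_sum[OF 3] s using 3 by (simp add: f0)
      qed
      finally show ?thesis .
    qed
    have G: "GA y z n = (1+y) * GA y z (n-1) +
        (\<Sum>a\<in>{1..<n-1}. (y * z ^ (a*(n-1-a) + a)) * (GA y z a * GA y z (n-1-a)))"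
    proof -
      have m: "\<And>a. a \<in> {1..<n-1} \<Longrightarrow> (if a = 0 then (1+y) * GA y z (n-1) else if a = n-1 then 0
      else (y * z ^ (a*(n-1-a) + a)) * (GA y z a * GA y z (n-1-a))) = (y * z ^ (a*(n-1-a) + a)) * (GA y z a * GA y z (n-1-a))"
        by auto
      have s: "(\<Sum>a\<in>{1..<n-1}. (if a = 0 then (1+y) * GA y z (n-1) else if a = n-1 then 0
      else (y * z ^ (a*(n-1-a) + a)) * (GA y z a * GA y z (n-1-a)))) = (\<Sum>a\<in>{1..<n-1}. (y * z ^ (a*(n-1-a) + a)) * (GA y z a * GA y z (n-1-a)))"
        by (rule sum.cong[OF refl m])
      show ?thesis unfolding GA_rec[OF 3] split_sum[OF 3] s using 3 by simp
    qed
    have "(\<Sum>a\<in>{1..<n-1}. (y * z ^ (a*(n-1-a) + a)) * (FA y z a * FA y z (n-1-a))) =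
          (\<Sum>a\<in>{1..<n-1}. (y * z ^ (a*(n-1-a) + a)) * (GA y z a * GA y z (n-1-a)))"
      using less.IH by (intro sum.cong refl) auto
    moreover have "FA y z (n-1) = GA y z (n-1)" using less.IH 3 by simp
    ultimately show ?thesis unfolding F G by (simp add: distrib_right)
  qed
qed

lemma rc_av213: "p \<in> avoiders n [2,1,3] \<Longrightarrow> rc n p \<in> avoiders n [1,3,2]"
proof -
  assume "p \<in> avoiders n [2,1,3]"
  then have p: "p permutes {1..n}" "\<not> contains_pattern [2,1,3] n p" by (auto simp: avoiders_def)
  have "\<not> contains_pattern [1,3,2] n (rc n p)"
    using rc_132_213[OF rc_permutes[OF p(1)]] p(2) rc_rc[of n p] by auto
  then show ?thesis using rc_permutes[OF p(1)] by (simp add: avoiders_def)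
qed

lemma rc_av132: "p \<in> avoiders n [1,3,2] \<Longrightarrow> rc n p \<in> avoiders n [2,1,3]"
proof -
  assume "p \<in> avoiders n [1,3,2]"
  then have p: "p permutes {1..n}" "\<not> contains_pattern [1,3,2] n p" by (auto simp: avoiders_def)
  have "\<not> contains_pattern [2,1,3] n (rc n p)"
    using rc_213_132[OF rc_permutes[OF p(1)]] p(2) rc_rc[of n p] by auto
  then show ?thesis using rc_permutes[OF p(1)] by (simp add: avoiders_def)
qed

lemma eq1: "(\<Sum>p\<in>avoiders n [2,1,3]. t ^ des n p * q ^ adi n p)
           = (\<Sum>p\<in>avoiders n [1,3,2]. t ^ des n p * q ^ adi_star n p)"
proof (rule sum.reindex_bij_witness[where i = "rc n" and j = "rc n"])
  fix p assume "p \<in> avoiders n [2,1,3]"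
  then show "rc n (rc n p) = p" "rc n p \<in> avoiders n [1,3,2]" using rc_rc rc_av213 by auto
  have pp: "p permutes {1..n}" using \<open>p \<in> _\<close> by (rule avP)
  show "t ^ des n (rc n p) * q ^ adi_star n (rc n p) = t ^ des n p * q ^ adi n p"
    using des_rc[OF pp] adi_rc[OF pp] by simp
next
  fix p assume "p \<in> avoiders n [1,3,2]"
  then show "rc n (rc n p) = p" "rc n p \<in> avoiders n [2,1,3]" using rc_rc rc_av132 by auto
qed

lemma eq3: "(\<Sum>p\<in>tilde213 n k. q ^ adi n p) = (\<Sum>p\<in>tilde132 n k. q ^ adi_star n p)"
proof (rule sum.reindex_bij_witness[where i = "rc n" and j = "rc n"])
  fix p assume h: "p \<in> tilde213 n k"
  then have a: "p \<in> avoiders n [2,1,3]" "dd n p = 0" "des n p = k" by (auto simp: tilde213_def)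
  have pp: "p permutes {1..n}" using a(1) by (rule avP)
  show "rc n (rc n p) = p" by (rule rc_rc)
  show "rc n p \<in> tilde132 n k" using rc_av213[OF a(1)] dd_rc[OF pp] des_rc[OF pp] a
    by (simp add: tilde132_def)
  show "q ^ adi_star n (rc n p) = q ^ adi n p" using adi_rc[OF pp] by simp
next
  fix p assume h: "p \<in> tilde132 n k"
  then have a: "p \<in> avoiders n [1,3,2]" "dd_star n p = 0" "des n p = k" by (auto simp: tilde132_def)
  have pp: "p permutes {1..n}" using a(1) by (rule avP)
  show "rc n (rc n p) = p" by (rule rc_rc)
  have "dd n (rc n p) = dd_star n p" using dd_rc[OF rc_permutes[OF pp]] rc_rc[of n p] by simp
  then show "rc n p \<in> tilde213 n k" using rc_av132[OF a(1)] des_rc[OF pp] a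
    by (simp add: tilde213_def)
qed

lemma GA_tilde:
  assumes n: "n \<ge> 1"
  shows "GA t q n = (\<Sum>k=0..(n-1) div 2. (\<Sum>p\<in>tilde213 n k. q ^ adi n p) * t ^ k * (1 + t) ^ (n - 1 - 2*k))"
proof -
  let ?S = "{p \<in> avoiders n [2,1,3]. dd n p = 0}"
  have finS: "finite ?S" using av_finite by simp
  have "(\<Sum>k=0..(n-1) div 2. (\<Sum>p\<in>tilde213 n k. q ^ adi n p) * t ^ k * (1 + t) ^ (n - 1 - 2*k))
      = (\<Sum>k=0..(n-1) div 2. \<Sum>p\<in>{p \<in> ?S. des n p = k}. wG t q n p)"
  proof (rule sum.cong[OF refl])
    fix k assume "k \<in> {0..(n-1) div 2}"
    have T: "tilde213 n k = {p \<in> ?S. des n p = k}" by (auto simp: tilde213_def)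
    show "(\<Sum>p\<in>tilde213 n k. q ^ adi n p) * t ^ k * (1 + t) ^ (n - 1 - 2*k) =
          (\<Sum>p\<in>{p \<in> ?S. des n p = k}. wG t q n p)"
      unfolding T mult.assoc sum_distrib_right
      by (rule sum.cong[OF refl]) (simp add: wG_def ac_simps)
  qed
  also have "\<dots> = (\<Sum>p\<in>?S. wG t q n p)"
  proof (rule sum.group[OF finS])
    show "finite {0..(n-1) div 2}" by simp
    show "des n ` ?S \<subseteq> {0..(n-1) div 2}"
    proof
      fix k assume "k \<in> des n ` ?S"
      then obtain p where "p \<in> ?S" "k = des n p" by auto
      then have "2 * k \<le> n - 1" using des_bound[of p n] avP by auto
      then show "k \<in> {0..(n-1) div 2}" by simp
    qed
  qed
  also have "\<dots> = GA t q n" unfolding GA_def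
    by (rule sum.mono_neutral_left) (auto simp: av_finite wG_def)
  finally show ?thesis by simp
qed

theorem theorem1p3:
  fixes n :: nat and t q :: "'a :: comm_ring_1"
  assumes "n \<ge> 1"
  shows "(\<Sum>p\<in>avoiders n [2,1,3]. t ^ des n p * q ^ adi n p)
           = (\<Sum>p\<in>avoiders n [1,3,2]. t ^ des n p * q ^ adi_star n p)
       \<and> (\<Sum>p\<in>avoiders n [1,3,2]. t ^ des n p * q ^ adi_star n p)
           = (\<Sum>k=0..(n-1) div 2. (\<Sum>p\<in>tilde213 n k. q ^ adi n p) * t ^ k * (1 + t) ^ (n - 1 - 2*k))
       \<and> (\<Sum>k=0..(n-1) div 2. (\<Sum>p\<in>tilde213 n k. q ^ adi n p) * t ^ k * (1 + t) ^ (n - 1 - 2*k))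
           = (\<Sum>k=0..(n-1) div 2. (\<Sum>p\<in>tilde132 n k. q ^ adi_star n p) * t ^ k * (1 + t) ^ (n - 1 - 2*k))"
proof (intro conjI)
  show 1: "(\<Sum>p\<in>avoiders n [2,1,3]. t ^ des n p * q ^ adi n p)
           = (\<Sum>p\<in>avoiders n [1,3,2]. t ^ des n p * q ^ adi_star n p)" by (rule eq1)
  have "(\<Sum>p\<in>avoiders n [2,1,3]. t ^ des n p * q ^ adi n p) = FA t q n" by (simp add: FA_def wF_def)
  then show "(\<Sum>p\<in>avoiders n [1,3,2]. t ^ des n p * q ^ adi_star n p)
           = (\<Sum>k=0..(n-1) div 2. (\<Sum>p\<in>tilde213 n k. q ^ adi n p) * t ^ k * (1 + t) ^ (n - 1 - 2*k))"
    using 1 FA_GA[of t q n] GA_tilde[OF assms, of t q] by simp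
  show "(\<Sum>k=0..(n-1) div 2. (\<Sum>p\<in>tilde213 n k. q ^ adi n p) * t ^ k * (1 + t) ^ (n - 1 - 2*k))
           = (\<Sum>k=0..(n-1) div 2. (\<Sum>p\<in>tilde132 n k. q ^ adi_star n p) * t ^ k * (1 + t) ^ (n - 1 - 2*k))"
    using eq3[where q = q and n = n] by simp
qed

end
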